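(* Let $k\ge2$ be an integer and $q=2^{-k}$. There is an optimal prefix code for $\mathrm{TDGD}(q)$ in which, for each signature $s\ge0$, the $s+1$ pairs $(i,j)$ with $i+j=s$ receive codewords of lengths $\Lambda_s$ or $\Lambda_s+1$ with the following counts. Case 1, $0\le s\le 2^{k-1}-2$: write $s=2^i+j-1$ with $0\le i\le k-2$, $0\le j\le 2^i-1$; then $\Lambda_s=(s+2)(i+1)-2^{i+1}$, with $2^i-j-1$ codewords of length $\Lambda_s$ and $2j+1$ of length $\Lambda_s+1$. Case 2, $s\ge 2^{k-1}-1$: write $s=2^{k-1}-1+(2^k-1)\ell+j$ with $\ell\ge0$, $0\le j\le 2^k-2$; then $\Lambda_s=(s+2)k-2^k$, and the numbers of codewords of lengths $\Lambda_s$ and $\Lambda_s+1$ are respectively: (a) if $0\le j\le 2^{k-1}-3$: $(2^k-1)\ell+2^{k-1}-j-1$ and $2j+1$; (b) if $j=2^{k-1}-2$: $(2^k-1)\ell$ and $2^k-2$; (c) if $2^{k-1}-1\le j\le 2^k-4$: $(2^k-1)\ell+3\cdot2^{k-1}-2-j$ and $2j+2-2^k$; (d) if $j=2^k-3$: $(2^k-1)\ell+2^{k-1}+1$ and $2^k-4$; (e) if $j=2^k-2$: $(2^k-1)\ell+2^{k-1}-1$ and $2^k-1$.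
   Context: $\mathrm{TDGD}(q)$ is the distribution $P(i,j)=(1-q)^2q^{i+j}$ on $\mathcal{A}=\{(i,j):i,j\in\mathbb{Z}_{\ge0}\}$; the signature of $(i,j)$ is $i+j$. A prefix code for $\mathcal{A}$ is optimal if it minimizes expected codeword length among all binary prefix codes for $\mathcal{A}$; which pair of a given signature receives which of the listed lengths is immaterial. *)

theory Defs
  imports "HOL-Analysis.Analysis" "HOL-Library.Sublist"
begin

definition TDGD :: "real \<Rightarrow> nat \<times> nat \<Rightarrow> real" where
  "TDGD q x = (1 - q)^2 * q ^ (fst x + snd x)"

text \<open>Binary prefix code on the alphabet nat x nat: no codeword is a prefix of the
  codeword of a different symbol (this also forces injectivity).\<close>
definition prefix_code :: "(nat \<times> nat \<Rightarrow> bool list) \<Rightarrow> bool" where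
  "prefix_code c \<longleftrightarrow> (\<forall>x y. x \<noteq> y \<longrightarrow> \<not> prefix (c x) (c y))"

definition exp_len :: "(nat \<times> nat \<Rightarrow> real) \<Rightarrow> (nat \<times> nat \<Rightarrow> bool list) \<Rightarrow> ennreal" where
  "exp_len P c = (\<integral>\<^sup>+ x. ennreal (P x * real (length (c x))) \<partial>count_space UNIV)"

definition optimal_prefix_code :: "(nat \<times> nat \<Rightarrow> real) \<Rightarrow> (nat \<times> nat \<Rightarrow> bool list) \<Rightarrow> bool" where
  "optimal_prefix_code P c \<longleftrightarrow> prefix_code c \<and>
     (\<forall>c'. prefix_code c' \<longrightarrow> exp_len P c \<le> exp_len P c')"

definition cnt :: "(nat \<times> nat \<Rightarrow> bool list) \<Rightarrow> nat \<Rightarrow> nat \<Rightarrow> nat" where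
  "cnt c s L = card {(a, b). a + b = s \<and> length (c (a, b)) = L}"

end

theory Submission
  imports Defs "HOL-Library.Discrete_Functions"
begin

fun bits :: "nat \<Rightarrow> nat \<Rightarrow> bool list" where
  "bits 0 n = []"
| "bits (Suc L) n = bits L (n div 2) @ [odd n]"

lemma length_bits[simp]: "length (bits L n) = L"
  by (induction L arbitrary: n) auto

lemma bits_add: "bits (L + d) m = bits L (m div 2^d) @ bits d m"
proof (induction d arbitrary: m)
  case 0 then show ?case by simp
next
  case (Suc d)
  have "bits (L + Suc d) m = bits (L + d) (m div 2) @ [odd m]" by simp
  also have "\<dots> = bits L (m div 2 div 2^d) @ bits d (m div 2) @ [odd m]" using Suc by simp
  also have "m div 2 div 2^d = m div 2^(Suc d)" by (simp add: div_mult2_eq)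
  finally show ?case by simp
qed

lemma bits_inj: "n < 2^L \<Longrightarrow> n' < 2^L \<Longrightarrow> bits L n = bits L n' \<Longrightarrow> n = n'"
proof (induction L arbitrary: n n')
  case 0 thus ?case by simp
next
  case (Suc L)
  from Suc.prems(3) have h1: "bits L (n div 2) = bits L (n' div 2)" and h2: "odd n = odd n'" by auto
  have "n div 2 < 2^L" "n' div 2 < 2^L" using Suc.prems by auto
  with h1 have "n div 2 = n' div 2" using Suc.IH by blast
  moreover have "n mod 2 = n' mod 2" using h2 by (simp add: mod2_eq_if)
  ultimately show ?case by (metis div_mult_mod_eq)
qed

lemma prefix_bits:
  assumes "prefix (bits L n) (bits L' m)"
  shows "L \<le> L' \<and> bits L n = bits L (m div 2^(L' - L))"
proof -
  have le: "L \<le> L'" using prefix_length_le[OF assms] by simp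
  then have "bits L' m = bits L (m div 2^(L' - L)) @ bits (L' - L) m"
    using bits_add[of L "L' - L" m] by simp
  with assms obtain zs where "bits L (m div 2^(L' - L)) @ bits (L' - L) m = bits L n @ zs"
    by (auto simp: prefix_def)
  then have "bits L n = bits L (m div 2^(L' - L))"
    by (metis append_eq_append_conv length_bits)
  with le show ?thesis by simp
qed

lemma card_bool_lists: "card {v::bool list. length v = n} = 2^n"
  using card_lists_length_eq[of "UNIV :: bool set" n] by simp

lemma finite_bool_lists: "finite {v::bool list. length v = n}"
  using card_bool_lists[of n] by (metis card.infinite power_not_zero zero_neq_numeral)

lemma kraft_finite:
  assumes pc: "prefix_code c" and fin: "finite F"
  shows "(\<Sum>x\<in>F. (1/2::real)^(length (c x))) \<le> 1"
proof -
  define M where "M = Max (insert 0 ((\<lambda>x. length (c x)) ` F))"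
  have leM: "x \<in> F \<Longrightarrow> length (c x) \<le> M" for x
    unfolding M_def using fin by (intro Max_ge) auto
  define Ext where "Ext x = (\<lambda>v. c x @ v) ` {v::bool list. length v = M - length (c x)}" for x
  have cardE: "card (Ext x) = 2^(M - length (c x))" for x
    unfolding Ext_def by (subst card_image) (auto simp: inj_on_def card_bool_lists)
  have finE: "finite (Ext x)" for x
    using cardE[of x] by (metis card.infinite power_not_zero zero_neq_numeral)
  have subE: "x \<in> F \<Longrightarrow> Ext x \<subseteq> {w. length w = M}" for x
  proof -
    assume "x \<in> F"
    then have "length (c x) \<le> M" by (rule leM)
    then show ?thesis unfolding Ext_def by auto
  qed
  have disj: "x \<in> F \<Longrightarrow> y \<in> F \<Longrightarrow> x \<noteq> y \<Longrightarrow> Ext x \<inter> Ext y = {}" for x y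
  proof (rule ccontr)
    assume "x \<in> F" "y \<in> F" "x \<noteq> y" "Ext x \<inter> Ext y \<noteq> {}"
    then obtain u v where uv: "c x @ u = c y @ v" unfolding Ext_def by auto
    have "prefix (c x) (c x @ u)" by simp
    moreover have "prefix (c y) (c x @ u)" unfolding uv by simp
    ultimately have "prefix (c x) (c y) \<or> prefix (c y) (c x)" by (rule prefix_same_cases)
    moreover have "\<not> prefix (c x) (c y)"
      by (rule pc[unfolded prefix_code_def, rule_format]) fact
    moreover have "\<not> prefix (c y) (c x)"
      by (rule pc[unfolded prefix_code_def, rule_format]) (use \<open>x \<noteq> y\<close> in auto)
    ultimately show False by blast
  qed
  have "(\<Sum>x\<in>F. card (Ext x)) = card (\<Union>x\<in>F. Ext x)"
    using card_UN_disjoint[OF fin, of Ext] finE disj by auto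
  also have "\<dots> \<le> card {w::bool list. length w = M}"
    using subE by (intro card_mono[OF finite_bool_lists]) auto
  finally have "(\<Sum>x\<in>F. (2::nat)^(M - length (c x))) \<le> 2^M"
    by (simp add: cardE card_bool_lists)
  then have "real (\<Sum>x\<in>F. (2::nat)^(M - length (c x))) \<le> real ((2::nat)^M)"
    by (simp only: of_nat_le_iff)
  then have "(\<Sum>x\<in>F. (2::real)^(M - length (c x))) \<le> 2^M"
    by simp
  moreover have "(\<Sum>x\<in>F. (2::real)^(M - length (c x))) = 2^M * (\<Sum>x\<in>F. (1/2::real)^(length (c x)))"
    unfolding sum_distrib_left
  proof (rule sum.cong)
    fix x assume "x \<in> F"
    then have "length (c x) \<le> M" by (rule leM)
    then have "(2::real)^(M - length (c x)) = 2^M / 2^(length (c x))"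
      by (simp add: power_diff)
    then show "(2::real)^(M - length (c x)) = 2^M * (1/2)^(length (c x))"
      by (simp add: power_one_over)
  qed simp
  ultimately show ?thesis by simp
qed

lemma code_from_lengths:
  fixes l :: "nat \<times> nat \<Rightarrow> nat"
  assumes fin: "\<And>L. finite {x. l x \<le> L}"
    and kraft: "\<And>F. finite F \<Longrightarrow> (\<Sum>x\<in>F. (1/2::real)^(l x)) \<le> 1"
  shows "\<exists>c. prefix_code c \<and> (\<forall>x. length (c x) = l x)"
proof -
  define e where "e = prod_encode"
  have einj: "e x = e y \<Longrightarrow> x = y" for x y
    unfolding e_def by (metis inj_prod_encode injD)
  define pr where "pr x = {y. l y < l x \<or> (l y = l x \<and> e y < e x)}" for x
  have finpr: "finite (pr x)" for x
    by (rule finite_subset[OF _ fin[of "l x"]]) (auto simp: pr_def)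
  have xnpr: "x \<notin> pr x" for x by (simp add: pr_def)
  have prle: "y \<in> pr x \<Longrightarrow> l y \<le> l x" for x y by (auto simp: pr_def)
  define N where "N x = (\<Sum>y\<in>pr x. (2::nat)^(l x - l y))" for x
  have Nreal: "real (N x) = 2^(l x) * (\<Sum>y\<in>pr x. (1/2::real)^(l y))" for x
    unfolding N_def of_nat_sum sum_distrib_left
  proof (rule sum.cong)
    fix y assume "y \<in> pr x"
    then have "l y \<le> l x" by (rule prle)
    then have "(2::real)^(l x - l y) = 2^(l x) / 2^(l y)" by (simp add: power_diff)
    then show "real (2 ^ (l x - l y)) = 2^(l x) * (1/2::real)^(l y)"
      by (simp add: power_one_over)
  qed simp
  have Nlt: "N x < 2^(l x)" for x
  proof -
    have "(\<Sum>y\<in>insert x (pr x). (1/2::real)^(l y)) \<le> 1"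
      using kraft finpr by simp
    then have "(\<Sum>y\<in>pr x. (1/2::real)^(l y)) + (1/2)^(l x) \<le> 1"
      using finpr xnpr by simp
    then have "2^(l x) * (\<Sum>y\<in>pr x. (1/2::real)^(l y)) + 1 \<le> 2^(l x)"
      by (simp add: field_simps power_one_over)
    then have "real (N x) + 1 \<le> 2^(l x)" using Nreal by simp
    then have "real (N x + 1) \<le> real (2^(l x))" by simp
    then show ?thesis by linarith
  qed
  have Nstep: "y \<in> pr x \<Longrightarrow> 2^(l x - l y) * (N y + 1) \<le> N x" for x y
  proof -
    assume yx: "y \<in> pr x"
    have sub: "insert y (pr y) \<subseteq> pr x"
      using yx by (auto simp: pr_def)
    have "2^(l x - l y) * (N y + 1) = (\<Sum>z\<in>insert y (pr y). (2::nat)^(l x - l z))"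
    proof -
      have "2^(l x - l y) * N y = (\<Sum>z\<in>pr y. (2::nat)^(l x - l z))"
        unfolding N_def sum_distrib_left
      proof (rule sum.cong)
        fix z assume "z \<in> pr y"
        then have "l z \<le> l y" by (rule prle)
        moreover have "l y \<le> l x" using yx by (rule prle)
        ultimately show "2 ^ (l x - l y) * 2 ^ (l y - l z) = (2::nat) ^ (l x - l z)"
          by (simp flip: power_add)
      qed simp
      moreover have "(\<Sum>z\<in>insert y (pr y). (2::nat)^(l x - l z)) = 2^(l x - l y) + (\<Sum>z\<in>pr y. (2::nat)^(l x - l z))"
        using finpr xnpr by (rule sum.insert)
      ultimately show ?thesis by (simp add: distrib_left)
    qed
    also have "\<dots> \<le> (\<Sum>z\<in>pr x. (2::nat)^(l x - l z))"
      by (rule sum_mono2[OF finpr sub]) simp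
    finally show ?thesis by (simp add: N_def)
  qed
  define c where "c x = bits (l x) (N x)" for x
  have "prefix_code c"
    unfolding prefix_code_def
  proof (intro allI impI notI)
    fix x y assume xy: "x \<noteq> y" and p: "prefix (c x) (c y)"
    from prefix_bits[OF p[unfolded c_def]] have le: "l x \<le> l y"
      and eqb: "bits (l x) (N x) = bits (l x) (N y div 2^(l y - l x))" by auto
    have "N y div 2^(l y - l x) < 2^(l x)"
    proof -
      have "N y < 2^(l x) * 2^(l y - l x)" using Nlt[of y] le by (simp flip: power_add)
      then show ?thesis by (simp add: div_less_iff_less_mult)
    qed
    with eqb Nlt[of x] have Neq: "N x = N y div 2^(l y - l x)" using bits_inj by blast
    have "e x \<noteq> e y" using einj xy by blast
    then have "x \<in> pr y \<or> y \<in> pr x" using le by (auto simp: pr_def)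
    then show False
    proof
      assume "x \<in> pr y"
      then have "2^(l y - l x) * (N x + 1) \<le> N y" by (rule Nstep)
      then have "N x + 1 \<le> N y div 2^(l y - l x)"
        by (simp add: less_eq_div_iff_mult_less_eq mult.commute)
      with Neq show False by simp
    next
      assume "y \<in> pr x"
      then have "l y \<le> l x" by (rule prle)
      with le have "l x = l y" by simp
      with Nstep[OF \<open>y \<in> pr x\<close>] Neq show False by simp
    qed
  qed
  moreover have "\<forall>x. length (c x) = l x" by (simp add: c_def)
  ultimately show ?thesis by blast
qed

definition Ablk :: "nat \<Rightarrow> (nat \<times> nat) set" where "Ablk s = {x. fst x + snd x = s}"
definition Sset :: "nat \<Rightarrow> (nat \<times> nat) set" where "Sset s = {x. s \<le> fst x + snd x}"

lemma Ablk_eq: "Ablk s = (\<lambda>a. (a, s - a)) ` {..s}"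
  unfolding Ablk_def by (auto simp: image_iff intro!: exI[where x="fst _"])

lemma finite_Ablk[simp]: "finite (Ablk s)"
  unfolding Ablk_eq by simp

lemma inj_Ablk: "inj_on (\<lambda>a. (a, s - a)) {..s}"
  by (auto simp: inj_on_def)

lemma sum_Ablk: "(\<Sum>x\<in>Ablk s. f x) = (\<Sum>a\<le>s. f (a, s - a))"
  unfolding Ablk_eq by (subst sum.reindex[OF inj_Ablk]) simp

lemma card_Ablk: "card (Ablk s) = Suc s"
  unfolding Ablk_eq by (subst card_image[OF inj_Ablk]) simp

lemma Ablk_sub: "Ablk s \<subseteq> Sset s"
  unfolding Ablk_def Sset_def by auto

lemma nn_fin_ind:
  fixes g :: "nat \<times> nat \<Rightarrow> ennreal"
  assumes "finite A"
  shows "(\<integral>\<^sup>+x. indicator A x * g x \<partial>count_space UNIV) = (\<Sum>x\<in>A. g x)"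
proof -
  have "(\<integral>\<^sup>+x. indicator A x * g x \<partial>count_space UNIV) = (\<integral>\<^sup>+x. g x * indicator A x \<partial>count_space UNIV)"
    by (simp add: mult.commute)
  also have "\<dots> = (\<integral>\<^sup>+x. g x \<partial>count_space A)"
    by (simp add: nn_integral_count_space_indicator)
  also have "\<dots> = (\<Sum>x\<in>A. g x)"
    using assms by (rule nn_integral_count_space_finite)
  finally show ?thesis .
qed

lemma ind_split:
  "(indicator (Sset s) x :: ennreal) = indicator (Ablk s) x + indicator (Sset (Suc s)) x"
  unfolding Ablk_def Sset_def by (auto simp: indicator_def)

lemma nn_split:
  fixes g :: "nat \<times> nat \<Rightarrow> ennreal"
  shows "(\<integral>\<^sup>+x. indicator (Sset s) x * g x \<partial>count_space UNIV)
    = (\<Sum>x\<in>Ablk s. g x) + (\<integral>\<^sup>+x. indicator (Sset (Suc s)) x * g x \<partial>count_space UNIV)"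
proof -
  have "(\<integral>\<^sup>+x. indicator (Sset s) x * g x \<partial>count_space UNIV)
     = (\<integral>\<^sup>+x. indicator (Ablk s) x * g x + indicator (Sset (Suc s)) x * g x \<partial>count_space UNIV)"
    by (simp only: ind_split[of s] distrib_right)
  also have "\<dots> = (\<integral>\<^sup>+x. indicator (Ablk s) x * g x \<partial>count_space UNIV)
      + (\<integral>\<^sup>+x. indicator (Sset (Suc s)) x * g x \<partial>count_space UNIV)"
    by (rule nn_integral_add) auto
  finally show ?thesis by (simp add: nn_fin_ind)
qed

lemma nn_point:
  fixes g :: "nat \<times> nat \<Rightarrow> ennreal"
  assumes "x \<in> Sset s"
  shows "g x \<le> (\<integral>\<^sup>+y. indicator (Sset s) y * g y \<partial>count_space UNIV)"
proof -
  have "g x = (\<integral>\<^sup>+y. indicator {x} y * g y \<partial>count_space UNIV)"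
    by (subst nn_fin_ind) auto
  also have "\<dots> \<le> (\<integral>\<^sup>+y. indicator (Sset s) y * g y \<partial>count_space UNIV)"
    using assms by (intro nn_integral_mono) (auto simp: indicator_def)
  finally show ?thesis .
qed

lemma nn_sum:
  fixes g :: "nat \<times> nat \<Rightarrow> ennreal"
  shows "(\<integral>\<^sup>+x. indicator (Sset s) x * g x \<partial>count_space UNIV) = (\<Sum>t. \<Sum>x\<in>Ablk (s + t). g x)"
proof -
  have pt: "indicator (Sset s) x * g x = (\<Sum>t. indicator (Ablk (s + t)) x * g x)" for x
  proof (cases "x \<in> Sset s")
    case True
    define t0 where "t0 = fst x + snd x - s"
    have "(\<Sum>t. indicator (Ablk (s + t)) x * g x) = (\<Sum>t\<in>{t0}. indicator (Ablk (s + t)) x * g x)"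
      by (rule suminf_finite) (use True in \<open>auto simp: t0_def Ablk_def Sset_def indicator_def\<close>)
    also have "\<dots> = g x" using True by (simp add: t0_def Ablk_def Sset_def indicator_def)
    finally show ?thesis using True by simp
  next
    case False
    then have "indicator (Ablk (s + t)) x * g x = 0" for t
      by (auto simp: Ablk_def Sset_def indicator_def)
    then have "(\<lambda>t. indicator (Ablk (s + t)) x * g x) = (\<lambda>t. 0)" by (rule ext)
    then show ?thesis using False by (simp add: indicator_def)
  qed
  have "(\<integral>\<^sup>+x. indicator (Sset s) x * g x \<partial>count_space UNIV)
      = (\<integral>\<^sup>+x. (\<Sum>t. indicator (Ablk (s + t)) x * g x) \<partial>count_space UNIV)"
    by (simp only: pt)
  also have "\<dots> = (\<Sum>t. \<integral>\<^sup>+x. indicator (Ablk (s + t)) x * g x \<partial>count_space UNIV)"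
    by (rule nn_integral_suminf) auto
  also have "\<dots> = (\<Sum>t. \<Sum>x\<in>Ablk (s + t). g x)"
    by (simp add: nn_fin_ind)
  finally show ?thesis .
qed

lemma Sset0[simp]: "Sset 0 = UNIV" by (auto simp: Sset_def)

lemma kraft_integral:
  assumes "prefix_code c"
  shows "(\<integral>\<^sup>+x. indicator (Sset 0) x * ennreal ((1/2)^(length (c x))) \<partial>count_space UNIV) \<le> 1"
proof -
  define f where "f x = ((1/2::real)^(length (c x)))" for x
  have "(\<Sum>t. \<Sum>x\<in>Ablk t. ennreal (f x)) \<le> 1"
  proof (rule suminf_le_const)
    show "summable (\<lambda>t. \<Sum>x\<in>Ablk t. ennreal (f x))" by simp
    fix n
    have disj: "disjoint_family_on Ablk {..<n}"
      by (auto simp: disjoint_family_on_def Ablk_def)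
    have e1: "(\<Sum>t<n. \<Sum>x\<in>Ablk t. ennreal (f x)) = (\<Sum>x\<in>(\<Union>t<n. Ablk t). ennreal (f x))"
      using sum.UNION_disjoint_family[OF _ _ disj, of "\<lambda>x. ennreal (f x)"] by simp
    have e2: "(\<Sum>x\<in>(\<Union>t<n. Ablk t). ennreal (f x)) = ennreal (\<Sum>x\<in>(\<Union>t<n. Ablk t). f x)"
      by (rule sum_ennreal) (simp add: f_def)
    have e3: "(\<Sum>x\<in>(\<Union>t<n. Ablk t). f x) \<le> 1"
      unfolding f_def by (rule kraft_finite[OF assms]) simp
    show "(\<Sum>t<n. \<Sum>x\<in>Ablk t. ennreal (f x)) \<le> 1"
      unfolding e1 e2 using e3 by simp
  qed
  then show ?thesis unfolding nn_sum f_def by simp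
qed

lemma divmod_eq:
  fixes b l j :: nat
  assumes "j < b"
  shows "(b * l + j) div b = l" "(b * l + j) mod b = j"
  using assms by (auto simp: add.commute[of "b*l"])

locale tdgd =
  fixes k :: nat
  assumes k2: "2 \<le> k"
begin

definition H :: nat where "H = 2^(k-1)"
definition KK :: nat where "KK = 2^k"

lemma KK_H: "KK = 2 * H"
  unfolding KK_def H_def using k2 by (cases k) auto

lemma H2: "2 \<le> H"
proof -
  have "2^1 \<le> (2::nat)^(k-1)" using k2 by (intro power_increasing) auto
  then show ?thesis by (simp add: H_def)
qed

definition s0 :: nat where "s0 = H - 1"

definition lg :: "nat \<Rightarrow> nat" where "lg s = floor_log (Suc s)"

lemma lg_le: "2^(lg s) \<le> Suc s"
  unfolding lg_def by (rule floor_log_exp2_le) simp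

lemma lg_gt: "Suc s < 2 * 2^(lg s)"
  unfolding lg_def by (rule floor_log_exp2_gt)

lemma lg_eqI: "2^i \<le> Suc s \<Longrightarrow> Suc s < 2 * 2^i \<Longrightarrow> lg s = i"
  unfolding lg_def by (rule floor_log_eqI) auto

lemma lg_head: assumes "s < s0" shows "lg s + 2 \<le> k"
proof -
  have "2^(lg s) \<le> Suc s" by (rule lg_le)
  also have "\<dots> < 2^(k-1)" using assms by (simp add: s0_def H_def)
  finally have "lg s < k - 1" by (simp add: power_strict_increasing_iff)
  then show ?thesis by simp
qed

definition tu :: "nat \<Rightarrow> nat" where "tu s = (s - s0) div (KK - 1)"
definition tj :: "nat \<Rightarrow> nat" where "tj s = (s - s0) mod (KK - 1)"
definition cc :: "nat \<Rightarrow> nat" where "cc s = (if tj s + 1 < H then 2 * tu s + 1 else 2 * tu s + 2)"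
definition lst :: "nat \<Rightarrow> bool" where "lst s \<longleftrightarrow> tj s + 2 = H \<or> tj s + 2 = KK"

definition Lam :: "nat \<Rightarrow> nat" where
  "Lam s = (if s < s0 then (s + 2) * (lg s + 1) - 2 * 2^(lg s) else (s + 2) * k - KK)"
definition Acnt :: "nat \<Rightarrow> nat" where
  "Acnt s = (if s < s0 then 2 * 2^(lg s) - s - 2
             else (KK - 1) * cc s - Suc s - (if lst s then 1 else 0))"
definition Dd :: "nat \<Rightarrow> nat" where
  "Dd s = (if s < s0 then Lam s - lg s else Lam s0 - (k - 1))"

definition our :: "nat \<Rightarrow> nat \<Rightarrow> nat" where
  "our s a = Lam s + (if a < Acnt s then 0 else 1)"
definition ol :: "nat \<times> nat \<Rightarrow> nat" where
  "ol x = our (fst x + snd x) (fst x)"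

lemma KK1: "KK - 1 > 0" using KK_H H2 by simp

lemma tail_decomp:
  assumes "s0 \<le> s"
  shows "s = s0 + (KK - 1) * tu s + tj s" "tj s < KK - 1"
  using assms KK1 unfolding tu_def tj_def by auto

lemma Lam_head: "s < s0 \<Longrightarrow> Lam s = (s + 2) * (lg s + 1) - 2 * 2^(lg s)"
  by (simp add: Lam_def)
lemma Lam_tail: "\<not> s < s0 \<Longrightarrow> Lam s = (s + 2) * k - KK"
  by (simp add: Lam_def)
lemma Dd_head: "s < s0 \<Longrightarrow> Dd s = Lam s - lg s"
  by (simp add: Dd_def)
lemma Dd_s0: "Dd s0 = Lam s0 - (k - 1)"
  by (simp add: Dd_def)
lemma Acnt_head: "s < s0 \<Longrightarrow> Acnt s = 2 * 2^(lg s) - s - 2"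
  by (simp add: Acnt_def)
lemma Acnt_tail: "\<not> s < s0 \<Longrightarrow> Acnt s = (KK - 1) * cc s - Suc s - (if lst s then 1 else 0)"
  by (simp add: Acnt_def)

lemma H_eq: "H = 2 * 2^(k-2)"
proof -
  have "k - 1 = Suc (k - 2)" using k2 by simp
  then show ?thesis by (simp add: H_def)
qed

lemma head_key:
  assumes "2^i \<le> Suc s"
  shows "2 * 2^i + i \<le> (s + 2) * (i + 1)"
proof (cases i)
  case 0 then show ?thesis using assms by simp
next
  case (Suc i')
  have P0: "1 \<le> (2::nat)^i" by simp
  have "2 * 2^i + i \<le> (2^i + 1) * (i + 1)" using Suc P0 by (simp add: algebra_simps)
  also have "\<dots> \<le> (s + 2) * (i + 1)" using assms by (intro mult_le_mono1) simp
  finally show ?thesis .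
qed

lemma head_facts:
  assumes "s < s0"
  shows "Acnt s = 2 * 2^(lg s) - s - 2" "Acnt s \<le> Suc s"
    "Suc s - Acnt s = 2 * (Suc s - 2^(lg s)) + 1"
    "Lam s = Dd s + lg s" "Dd (Suc s) = Dd s + lg s + 1"
proof -
  define i where "i = lg s"
  define P where "P = (2::nat)^i"
  have P1: "P \<le> Suc s" "Suc s < 2 * P" using lg_le[of s] lg_gt[of s] by (simp_all add: P_def i_def)
  show A: "Acnt s = 2 * 2^(lg s) - s - 2" using assms by (rule Acnt_head)
  then have A': "Acnt s = 2 * P - s - 2" by (simp add: P_def i_def)
  show "Acnt s \<le> Suc s" using A' P1 by linarith
  show "Suc s - Acnt s = 2 * (Suc s - 2^(lg s)) + 1" using A' P1 unfolding P_def i_def by linarith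
  define X where "X = (s + 2) * (i + 1)"
  have key: "2 * P + i \<le> X" unfolding X_def P_def i_def by (rule head_key[OF lg_le])
  have L: "Lam s = X - 2 * P" unfolding X_def P_def i_def by (rule Lam_head[OF assms])
  have D: "Dd s = Lam s - i" unfolding i_def by (rule Dd_head[OF assms])
  show "Lam s = Dd s + lg s" using L D key unfolding i_def[symmetric] by linarith
  have goal: "Dd (Suc s) = Dd s + i + 1"
  proof (cases "Suc s < s0")
    case True
    show ?thesis
    proof (cases "Suc (Suc s) < 2 * P")
      case True
      have lgeq: "lg (Suc s) = i" using P1 True by (intro lg_eqI) (simp_all add: P_def)
      have LS: "Lam (Suc s) = (Suc s + 2) * (i + 1) - 2 * P"
        using Lam_head[OF \<open>Suc s < s0\<close>] unfolding lgeq P_def .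
      have X1: "(Suc s + 2) * (i + 1) = X + (i + 1)" by (simp add: X_def algebra_simps)
      have DS: "Dd (Suc s) = Lam (Suc s) - i"
        using Dd_head[OF \<open>Suc s < s0\<close>] unfolding lgeq .
      show ?thesis using LS X1 DS L D key by linarith
    next
      case False
      then have e: "s + 2 = 2 * P" using P1 by simp
      have lgeq: "lg (Suc s) = i + 1" using e by (intro lg_eqI) (simp_all add: P_def)
      have LS: "Lam (Suc s) = (Suc s + 2) * (i + 2) - 2 * (2 * P)"
        using Lam_head[OF \<open>Suc s < s0\<close>] unfolding lgeq P_def by simp
      have DS: "Dd (Suc s) = Lam (Suc s) - (i + 1)"
        using Dd_head[OF \<open>Suc s < s0\<close>] unfolding lgeq .
      define Y where "Y = P * i"
      have X1: "(Suc s + 2) * (i + 2) = 2 * Y + 4 * P + i + 2" using e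
        by (simp add: Y_def algebra_simps)
      have X2: "X = 2 * Y + 2 * P" using e by (simp add: X_def Y_def algebra_simps)
      show ?thesis using LS X1 X2 DS L D key by linarith
    qed
  next
    case False
    then have ss0: "Suc s = s0" using assms by simp
    then have e: "s + 2 = H" using H2 by (simp add: s0_def)
    have "2^(k-2) \<le> Suc s" "Suc s < 2 * 2^(k-2)" using e H_eq by simp_all
    then have ik: "i = k - 2" unfolding i_def by (rule lg_eqI)
    have eP: "s + 2 = 2 * P" using e ik H_eq unfolding P_def by simp
    have k: "k = i + 2" using ik k2 by simp
    have DS: "Dd (Suc s) = Lam s0 - (k - 1)" using ss0 Dd_s0 by simp
    have LS0: "Lam s0 = (s0 + 2) * k - KK" by (rule Lam_tail) simp
    have KKP: "KK = 2 * (2 * P)" using KK_H e eP by simp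
    define Y where "Y = P * i"
    have X1: "(s0 + 2) * k = 2 * Y + 4 * P + i + 2" using eP ss0 k
      by (simp add: Y_def algebra_simps)
    have X2: "X = 2 * Y + 2 * P" using eP by (simp add: X_def Y_def algebra_simps)
    show ?thesis using DS LS0 KKP X1 X2 L D key k by linarith
  qed
  then show "Dd (Suc s) = Dd s + lg s + 1" by (simp add: i_def)
qed


lemma KK4: "4 \<le> KK" using KK_H H2 by simp

lemma tail_Lam_ge:
  assumes "s0 \<le> s" shows "s + (k - 1) + KK \<le> (s + 2) * k"
proof -
  have sH: "H \<le> s + 1" using assms H2 by (simp add: s0_def)
  have a: "(s + 2) * k = s * (k - 1) + s + 2 * k" using k2
    by (simp add: algebra_simps)
  have b: "(H - 1) * (k - 1) \<le> s * (k - 1)" using sH by (intro mult_le_mono1) simp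
  show ?thesis
  proof (cases "k = 2")
    case True
    then have "H = 2" unfolding H_def by simp
    then show ?thesis using True sH KK_H by (simp add: algebra_simps)
  next
    case False
    then have k3: "2 \<le> k - 1" using k2 by simp
    have d: "H * 2 \<le> H * (k - 1)" using k3 by (intro mult_le_mono2)
    have e: "(H - 1) * (k - 1) + (k - 1) = H * (k - 1)" using H2
      by (metis Suc_diff_1 add.commute less_le_trans mult_Suc numeral_2_eq_2 zero_less_Suc)
    show ?thesis using a b d e KK_H sH by linarith
  qed
qed

lemma tail_facts:
  assumes "s0 \<le> s"
  shows "Lam (Suc s) = Lam s + k" "cc (Suc s) = cc s + (if lst s then 1 else 0)"
    "Suc s + Acnt s + cc (Suc s) = KK * cc s" "Acnt s \<le> Suc s" "cc s \<le> Suc s"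
    "s + (k - 1) \<le> Lam s"
proof -
  have ge: "s + (k - 1) + KK \<le> (s + 2) * k" by (rule tail_Lam_ge[OF assms])
  have LT: "Lam s = (s + 2) * k - KK" using assms by (intro Lam_tail) simp
  have LT1: "Lam (Suc s) = (Suc s + 2) * k - KK" using assms by (intro Lam_tail) simp
  have m1: "(Suc s + 2) * k = (s + 2) * k + k" by simp
  show "Lam (Suc s) = Lam s + k" using LT LT1 m1 ge by linarith
  show "s + (k - 1) \<le> Lam s" using LT ge by linarith
  define l where "l = tu s"
  define j where "j = tj s"
  define M where "M = (KK - 1) * l"
  have sd: "s = s0 + M + j" and jlt: "j < KK - 1"
    using tail_decomp[OF assms] by (simp_all add: l_def j_def M_def)
  have s0H: "s0 + 1 = H" using H2 by (simp add: s0_def)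
  have M1: "(KK - 1) * (2 * l + 1) = 2 * M + (KK - 1)" by (simp add: M_def algebra_simps)
  have M2: "(KK - 1) * (2 * l + 2) = 2 * M + 2 * (KK - 1)" by (simp add: M_def algebra_simps)
  have cc_s: "cc s = (if j + 1 < H then 2 * l + 1 else 2 * l + 2)" by (simp add: cc_def l_def j_def)
  have lst_s: "lst s \<longleftrightarrow> j + 2 = H \<or> j + 2 = KK" by (simp add: lst_def j_def)
  have AT: "Acnt s = (KK - 1) * cc s - Suc s - (if lst s then 1 else 0)"
    using assms by (intro Acnt_tail) simp
  have Ml: "3 * l \<le> M" using KK4 unfolding M_def by (intro mult_le_mono1) simp
  show cc_le: "cc s \<le> Suc s" using cc_s sd Ml H2 by auto
  show "cc (Suc s) = cc s + (if lst s then 1 else 0)"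
  proof (cases "j + 1 < KK - 1")
    case True
    have "Suc s - s0 = (KK - 1) * l + (j + 1)" using sd by (simp add: M_def)
    then have tu1: "tu (Suc s) = l" and tj1: "tj (Suc s) = j + 1"
      using divmod_eq[OF True, of l] by (simp_all add: tu_def tj_def)
    have "cc (Suc s) = (if j + 2 < H then 2 * l + 1 else 2 * l + 2)"
      by (simp add: cc_def tu1 tj1)
    then show ?thesis using cc_s lst_s True KK_H by auto
  next
    case False
    then have jj: "j + 2 = KK" using jlt by simp
    have ml: "(KK - 1) * (l + 1) = M + (KK - 1)" unfolding M_def by simp
    have "Suc s - s0 = (KK - 1) * (l + 1) + 0" using sd jj ml KK1 by linarith
    then have tu1: "tu (Suc s) = l + 1" and tj1: "tj (Suc s) = 0"
      using divmod_eq[OF KK1, of "l + 1"] by (simp_all add: tu_def tj_def)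
    have "cc (Suc s) = 2 * l + 3" using H2 by (simp add: cc_def tu1 tj1)
    then show ?thesis using cc_s lst_s jj KK_H by auto
  qed
  then have ccS: "cc (Suc s) = cc s + (if lst s then 1 else 0)" .
  have big: "Suc s + (if lst s then 1 else 0) \<le> (KK - 1) * cc s \<and> (KK - 1) * cc s \<le> 2 * Suc s + (if lst s then 1 else 0)"
  proof (cases "j + 1 < H")
    case True
    then have "cc s = 2 * l + 1" using cc_s by simp
    moreover have "lst s \<longleftrightarrow> j + 2 = H" using lst_s True KK_H by auto
    ultimately show ?thesis using M1 sd s0H KK_H True by auto
  next
    case False
    then have "cc s = 2 * l + 2" using cc_s by simp
    moreover have "lst s \<longleftrightarrow> j + 2 = KK" using lst_s False KK_H by auto
    ultimately show ?thesis using M2 sd s0H KK_H False jlt by auto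
  qed
  define Z where "Z = (KK - 1) * cc s"
  define e where "e = (if lst s then 1 else 0::nat)"
  have AT': "Acnt s = Z - Suc s - e" using AT by (simp add: Z_def e_def)
  have big': "Suc s + e \<le> Z \<and> Z \<le> 2 * Suc s + e" using big by (simp add: Z_def e_def)
  show "Acnt s \<le> Suc s" using AT' conjunct1[OF big'] conjunct2[OF big'] by arith
  have KKs: "KK = Suc (KK - 1)" using KK1 by simp
  have KKc: "KK * cc s = Z + cc s" unfolding Z_def by (subst KKs) simp
  have ccS': "cc (Suc s) = cc s + e" using ccS by (simp add: e_def)
  show "Suc s + Acnt s + cc (Suc s) = KK * cc s" using AT' conjunct1[OF big'] conjunct2[OF big'] ccS' KKc by arith
qed

lemma cc_s0: "cc s0 = 1"
  using H2 by (simp add: cc_def tu_def tj_def)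

lemma Lam_s0: "Lam s0 = Dd s0 + (k - 1)"
  using tail_facts(6)[of s0] Dd_s0 by simp

end

context tdgd
begin

definition q :: real where "q = 1 / 2^k"
definition wt :: "nat \<times> nat \<Rightarrow> real" where "wt x = q ^ (fst x + snd x)"
definition Cost :: "nat \<Rightarrow> (nat \<times> nat \<Rightarrow> nat) \<Rightarrow> ennreal" where
  "Cost s l = (\<integral>\<^sup>+x. indicator (Sset s) x * ennreal (wt x * real (l x)) \<partial>count_space UNIV)"
definition Kr :: "nat \<Rightarrow> (nat \<times> nat \<Rightarrow> nat) \<Rightarrow> ennreal" where
  "Kr s l = (\<integral>\<^sup>+x. indicator (Sset s) x * ennreal ((1/2) ^ (l x)) \<partial>count_space UNIV)"

lemma q_pos: "0 < q" by (simp add: q_def)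
lemma wt_nonneg: "0 \<le> wt x" using q_pos by (simp add: wt_def)

lemma Cost_split: "Cost s l = ennreal (\<Sum>x\<in>Ablk s. wt x * real (l x)) + Cost (Suc s) l"
  unfolding Cost_def
  by (subst nn_split) (simp add: wt_nonneg sum_ennreal)

lemma Kr_split: "Kr s l = ennreal (\<Sum>x\<in>Ablk s. (1/2::real) ^ (l x)) + Kr (Suc s) l"
  unfolding Kr_def
  by (subst nn_split) (simp add: sum_ennreal)

lemma Ablk_wt: "x \<in> Ablk s \<Longrightarrow> wt x = q ^ s"
  by (simp add: wt_def Ablk_def)

lemma ol_Ablk: "a \<le> s \<Longrightarrow> ol (a, s - a) = our s a"
  by (simp add: ol_def)

lemma sum_our:
  fixes f :: "nat \<Rightarrow> real"
  assumes "Acnt s \<le> Suc s"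
  shows "(\<Sum>x\<in>Ablk s. f (ol x)) = real (Acnt s) * f (Lam s) + real (Suc s - Acnt s) * f (Suc (Lam s))"
proof -
  have "(\<Sum>x\<in>Ablk s. f (ol x)) = (\<Sum>a\<le>s. f (our s a))"
    unfolding sum_Ablk by (rule sum.cong) (simp_all add: ol_Ablk)
  also have "\<dots> = (\<Sum>a\<le>s. if a < Acnt s then f (Lam s) else f (Suc (Lam s)))"
    by (rule sum.cong) (simp_all add: our_def)
  also have "\<dots> = (\<Sum>a\<in>{..s} \<inter> {a. a < Acnt s}. f (Lam s)) + (\<Sum>a\<in>{..s} \<inter> - {a. a < Acnt s}. f (Suc (Lam s)))"
    by (rule sum.If_cases) simp
  also have "{..s} \<inter> {a. a < Acnt s} = {..<Acnt s}" using assms by auto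
  also have "{..s} \<inter> - {a. a < Acnt s} = {Acnt s..s}" by auto
  finally show ?thesis by simp
qed

lemma Acnt_le: "Acnt s \<le> Suc s"
  using head_facts(2)[of s] tail_facts(4)[of s] by (cases "s < s0") auto

lemma kb_head:
  assumes "s < s0"
  shows "(\<Sum>x\<in>Ablk s. (1/2::real) ^ (ol x)) = (1/2)^(Dd s) - (1/2)^(Dd (Suc s))"
proof -
  define D where "D = Dd s"
  define i where "i = lg s"
  define P where "P = (2::nat)^i"
  have hf: "Acnt s = 2 * P - s - 2" "Suc s - Acnt s = 2 * (Suc s - P) + 1"
    "Lam s = D + i" "Dd (Suc s) = D + i + 1"
    using head_facts[OF assms] by (simp_all add: D_def i_def P_def)
  have P1: "P \<le> Suc s" "Suc s < 2 * P" using lg_le[of s] lg_gt[of s] by (simp_all add: P_def i_def)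
  have cnt: "2 * Acnt s + (Suc s - Acnt s) = 2 * P - 1" using hf P1 by linarith
  have "(\<Sum>x\<in>Ablk s. (1/2::real) ^ (ol x))
      = real (Acnt s) * (1/2)^(D + i) + real (Suc s - Acnt s) * (1/2)^(Suc (D + i))"
    using sum_our[OF Acnt_le[of s], where f="\<lambda>n. (1/2::real)^n"] hf by simp
  also have "\<dots> = real (2 * Acnt s + (Suc s - Acnt s)) * (1/2)^(Suc (D + i))"
    by (simp add: field_simps)
  also have "\<dots> = real (2 * P - 1) * (1/2)^(Suc (D + i))" by (simp only: cnt)
  also have "\<dots> = (1/2)^D - (1/2)^(D + i + 1)"
  proof -
    have r: "real (2 * P - 1) = 2 * 2^i - 1" using P1 by (simp add: P_def of_nat_diff)
    have m: "(2 * 2^i) * (1/2::real)^(Suc (D + i)) = (1/2)^D"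
      by (simp add: power_add field_simps)
    have "real (2 * P - 1) * (1/2::real)^(Suc (D + i)) = (2 * 2^i) * (1/2::real)^(Suc (D + i)) - (1/2)^(Suc (D + i))"
      unfolding r by (simp add: left_diff_distrib)
    also have "\<dots> = (1/2)^D - (1/2)^(D + i + 1)" unfolding m by simp
    finally show ?thesis .
  qed
  finally show ?thesis by (simp add: hf D_def)
qed

definition R :: "nat \<Rightarrow> real" where
  "R s = real (cc s) * 2^(k-1) * (1/2)^(Lam s)"

lemma kb_tail:
  assumes "s0 \<le> s"
  shows "(\<Sum>x\<in>Ablk s. (1/2::real) ^ (ol x)) = R s - R (Suc s)"
proof -
  have tf: "Lam (Suc s) = Lam s + k" "Suc s + Acnt s + cc (Suc s) = KK * cc s"
    using tail_facts[OF assms] by simp_all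
  define L where "L = Lam s"
  have "(\<Sum>x\<in>Ablk s. (1/2::real) ^ (ol x))
      = real (Acnt s) * (1/2)^L + real (Suc s - Acnt s) * (1/2)^(Suc L)"
    using sum_our[OF Acnt_le[of s], where f="\<lambda>n. (1/2::real)^n"] by (simp add: L_def)
  also have "\<dots> = real (Suc s + Acnt s) * (1/2)^(Suc L)"
    using Acnt_le[of s] by (simp add: field_simps of_nat_diff)
  also have "real (Suc s + Acnt s) = real KK * real (cc s) - real (cc (Suc s))"
    using tf(2) by (metis add_diff_cancel_right' of_nat_add of_nat_mult)
  also have "(real KK * real (cc s) - real (cc (Suc s))) * (1/2::real)^(Suc L) = R s - R (Suc s)"
  proof -
    have k1: "k = Suc (k - 1)" using k2 by simp
    have a: "real KK * (1/2::real)^(Suc L) = 2^(k-1) * (1/2)^L"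
      unfolding KK_def by (subst (1) k1) (simp add: field_simps)
    have b: "(1/2::real)^(Suc L) = 2^(k-1) * (1/2)^(Lam (Suc s))"
      unfolding tf(1) L_def[symmetric] by (subst (2) k1) (simp add: power_add field_simps)
    have "(real KK * real (cc s) - real (cc (Suc s))) * (1/2::real)^(Suc L)
        = real (cc s) * (real KK * (1/2)^(Suc L)) - real (cc (Suc s)) * (1/2)^(Suc L)"
      by (simp add: algebra_simps)
    also have "\<dots> = real (cc s) * (2^(k-1) * (1/2)^L) - real (cc (Suc s)) * (2^(k-1) * (1/2)^(Lam (Suc s)))"
      by (subst a, subst b, rule refl)
    also have "\<dots> = R s - R (Suc s)" by (simp add: R_def L_def mult.assoc)
    finally show ?thesis .
  qed
  finally show ?thesis .
qed

lemma R_s0: "R s0 = (1/2)^(Dd s0)"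
proof -
  have "Lam s0 = Dd s0 + (k - 1)" by (rule Lam_s0)
  then show ?thesis unfolding R_def cc_s0 by (simp add: power_add field_simps)
qed

lemma R_nonneg: "0 \<le> R s" by (simp add: R_def)

lemma R_bound:
  assumes "s0 \<le> s"
  shows "R s \<le> real (Suc s) * (1/2)^s"
proof -
  have tf: "cc s \<le> Suc s" "s + (k - 1) \<le> Lam s" using tail_facts[OF assms] by simp_all
  have e: "(2::real)^(k-1) * (1/2)^(Lam s) = (1/2)^(Lam s - (k - 1))"
  proof -
    have "Lam s = (Lam s - (k - 1)) + (k - 1)" using tf by simp
    then have "(1/2::real)^(Lam s) = (1/2)^(Lam s - (k-1)) * (1/2)^(k-1)"
      by (metis power_add)
    then show ?thesis by (simp add: field_simps)
  qed
  have "(1/2::real)^(Lam s - (k - 1)) \<le> (1/2)^s"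
    using tf by (intro power_decreasing) auto
  then have "2^(k-1) * (1/2::real)^(Lam s) \<le> (1/2)^s" using e by simp
  moreover have "real (cc s) \<le> real (Suc s)" using tf by simp
  ultimately show ?thesis unfolding R_def mult.assoc
    by (intro mult_mono) auto
qed

lemma R_lim: "(\<lambda>n. R (s0 + n)) \<longlonglongrightarrow> 0"
proof (rule Lim_transform_bound)
  show "\<forall>\<^sub>F n in sequentially. norm (R (s0 + n)) \<le> norm (real n * (1/2::real)^n + real (Suc s0) * (1/2)^n)"
  proof (rule always_eventually, rule allI)
    fix n
    have "R (s0 + n) \<le> real (Suc (s0 + n)) * (1/2)^(s0 + n)" by (rule R_bound) simp
    also have "\<dots> \<le> real (Suc (s0 + n)) * (1/2)^n" by (intro mult_left_mono power_decreasing) auto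
    also have "\<dots> = real n * (1/2::real)^n + real (Suc s0) * (1/2)^n" by (simp add: algebra_simps)
    finally show "norm (R (s0 + n)) \<le> norm (real n * (1/2::real)^n + real (Suc s0) * (1/2)^n)"
      using R_nonneg[of "s0 + n"] by simp
  qed
  show "(\<lambda>n. real n * (1/2::real)^n + real (Suc s0) * (1/2)^n) \<longlonglongrightarrow> 0"
    using tendsto_add[OF powser_times_n_limit_0[of "1/2::real"] tendsto_mult_right_zero[OF LIMSEQ_power_zero[of "1/2::real"]]]
    by simp
qed

lemma Kr_tail: "Kr s0 ol = ennreal ((1/2)^(Dd s0))"
proof -
  have "Kr s0 ol = (\<Sum>t. \<Sum>x\<in>Ablk (s0 + t). ennreal ((1/2) ^ (ol x)))"
    unfolding Kr_def by (rule nn_sum)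
  also have "\<dots> = (\<Sum>t. ennreal (R (s0 + t) - R (Suc (s0 + t))))"
    by (subst sum_ennreal) (simp_all add: kb_tail)
  also have "\<dots> = ennreal (\<Sum>t. R (s0 + t) - R (Suc (s0 + t)))"
  proof (rule suminf_ennreal2)
    show "0 \<le> R (s0 + t) - R (Suc (s0 + t))" for t
      using kb_tail[of "s0 + t"] sum_nonneg[of "Ablk (s0+t)" "\<lambda>x. (1/2::real)^(ol x)"] by simp
    show "summable (\<lambda>t. R (s0 + t) - R (Suc (s0 + t)))"
      using telescope_sums'[OF R_lim] by (auto simp: sums_iff)
  qed
  also have "(\<Sum>t. R (s0 + t) - R (Suc (s0 + t))) = R s0"
    using telescope_sums'[OF R_lim] by (simp add: sums_iff)
  finally show ?thesis by (simp add: R_s0)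
qed

lemma Kr_our: "s \<le> s0 \<Longrightarrow> Kr s ol = ennreal ((1/2)^(Dd s))"
proof (induction "s0 - s" arbitrary: s)
  case 0 then have "s = s0" by simp
  then show ?case by (simp add: Kr_tail)
next
  case (Suc d)
  then have ss: "s < s0" by simp
  have dd: "d = s0 - Suc s" using Suc.hyps(2) by simp
  have IH: "Kr (Suc s) ol = ennreal ((1/2)^(Dd (Suc s)))"
    using Suc.hyps(1)[OF dd] ss by simp
  have "Kr s ol = ennreal ((1/2)^(Dd s) - (1/2)^(Dd (Suc s))) + ennreal ((1/2)^(Dd (Suc s)))"
    unfolding Kr_split[of s] IH kb_head[OF ss] ..
  also have "\<dots> = ennreal ((1/2)^(Dd s))"
  proof -
    have "(1/2::real)^(Dd (Suc s)) \<le> (1/2)^(Dd s)"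
      using head_facts(5)[OF ss] by (intro power_decreasing) auto
    then show ?thesis by (subst ennreal_plus[symmetric]) auto
  qed
  finally show ?case .
qed

end

lemma two_pow_ge: "real t + 1 \<le> (2::real)^t"
proof -
  have "t < 2^t" by (rule less_exp)
  then have "real t + 1 \<le> real ((2::nat)^t)" by linarith
  then show ?thesis by simp
qed

lemma lagr:
  fixes p lam :: real and l n :: nat
  assumes p: "0 < p" and lo: "lam / 2 \<le> p * 2^l" and hi: "p * 2^l \<le> lam"
  shows "p * real l + lam * (1/2)^l \<le> p * real n + lam * (1/2)^n"
proof -
  define y where "y = (1/2::real)^l"
  have y0: "0 < y" by (simp add: y_def)
  have y2: "y * 2^l = 1" by (simp add: y_def power_one_over)
  have "0 < p * 2^l" using p by simp
  then have lam0: "0 \<le> lam" using hi by linarith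
  have plo: "lam * y / 2 \<le> p"
  proof -
    have "lam / 2 * y \<le> p * 2^l * y" using lo y0 by (intro mult_right_mono) auto
    then show ?thesis using y2 by (simp add: field_simps)
  qed
  have phi: "p \<le> lam * y"
  proof -
    have "p * 2^l * y \<le> lam * y" using hi y0 by (intro mult_right_mono) auto
    then show ?thesis using y2 by (simp add: field_simps)
  qed
  show ?thesis
  proof (cases "l \<le> n")
    case True
    then obtain t where n: "n = l + t" using le_Suc_ex by blast
    have hn: "(1/2::real)^n = y * (1/2)^t" by (simp add: n y_def power_add)
    have a: "1 - (1/2::real)^t \<le> real t / 2"
    proof (cases "t \<le> 1")
      case True then show ?thesis by (cases t) auto
    next
      case False
      have "1 - (1/2::real)^t \<le> 1" by simp
      also have "1 \<le> real t / 2" using False by simp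
      finally show ?thesis .
    qed
    have "lam * y * (1 - (1/2)^t) \<le> lam * y * (real t / 2)"
      using a lam0 y0 by (intro mult_left_mono) auto
    also have "\<dots> = (lam * y / 2) * real t" by simp
    also have "\<dots> \<le> p * real t" using plo by (intro mult_right_mono) auto
    finally have "lam * y * (1 - (1/2)^t) \<le> p * real t" .
    then show ?thesis unfolding hn y_def[symmetric] by (simp add: n algebra_simps)
  next
    case False
    define t where "t = l - n"
    have l: "l = n + t" and t1: "1 \<le> t" using False by (simp_all add: t_def)
    have hn: "(1/2::real)^n = y * 2^t"
    proof -
      have "y = (1/2)^n * (1/2)^t" by (simp add: y_def l power_add)
      then show ?thesis by (simp add: power_one_over field_simps)
    qed
    have "p * real t \<le> lam * y * real t" using phi by (intro mult_right_mono) auto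
    also have "\<dots> \<le> lam * y * (2^t - 1)"
      using two_pow_ge[of t] lam0 y0 by (intro mult_left_mono) auto
    finally have "p * real t \<le> lam * y * (2^t - 1)" .
    then show ?thesis unfolding hn y_def[symmetric] by (simp add: l algebra_simps)
  qed
qed

lemma elem_bound: "real i + 2 \<le> real e + 2^(i+1) * (1/2::real)^e"
proof (cases "e \<le> i")
  case True
  define t where "t = i + 1 - e"
  have i: "i + 1 = e + t" and t: "1 \<le> t" using True by (simp_all add: t_def)
  have "(2::real)^(i+1) = 2^e * 2^t" by (simp only: i power_add)
  then have "2^(i+1) * (1/2::real)^e = 2^t" by (simp add: power_one_over)
  moreover have "real t + 1 \<le> 2^t" by (rule two_pow_ge)
  moreover have "real i + 1 = real e + real t"
  proof -
    have "real (i + 1) = real (e + t)" using i by simp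
    then show ?thesis by simp
  qed
  ultimately show ?thesis by linarith
next
  case False
  show ?thesis
  proof (cases "e = i + 1")
    case True then show ?thesis by (simp add: power_one_over)
  next
    case False
    with \<open>\<not> e \<le> i\<close> have "i + 2 \<le> e" by simp
    then have "real i + 2 \<le> real e" by simp
    moreover have "0 \<le> 2^(i+1) * (1/2::real)^e" by simp
    ultimately show ?thesis by linarith
  qed
qed

lemma local_clean:
  fixes A :: "'a set" and e :: "'a \<Rightarrow> nat" and w W :: real
  assumes fin: "finite A" and cardA: "card A = 2^i + j" and j: "j < 2^i"
    and kr: "(\<Sum>x\<in>A. (1/2::real)^(e x)) + (1/2)^f \<le> 1"
    and W0: "0 \<le> W" and Ww: "W \<le> w"
  shows "w * (real (card A) * (real i + 2) - 2^(i+1) + 1) + W * (real i + 1)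
       \<le> w * real (\<Sum>x\<in>A. e x) + W * real f"
proof -
  define n where "n = card A"
  define K where "K = (\<Sum>x\<in>A. (1/2::real)^(e x))"
  have sum1: "real n * (real i + 2) \<le> real (\<Sum>x\<in>A. e x) + 2^(i+1) * K"
  proof -
    have "real n * (real i + 2) = (\<Sum>x\<in>A. real i + 2)" by (simp add: n_def)
    also have "\<dots> \<le> (\<Sum>x\<in>A. real (e x) + 2^(i+1) * (1/2::real)^(e x))"
      by (rule sum_mono) (rule elem_bound)
    also have "\<dots> = real (\<Sum>x\<in>A. e x) + 2^(i+1) * K"
      by (simp add: K_def sum.distrib sum_distrib_left)
    finally show ?thesis .
  qed
  have Kf: "K \<le> 1 - (1/2)^f" using kr by (simp add: K_def)
  have w0: "0 \<le> w" using W0 Ww by simp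
  have base: "real n * (real i + 2) - 2^(i+1) + 2^(i+1) * (1/2)^f \<le> real (\<Sum>x\<in>A. e x)"
  proof -
    have "2^(i+1) * K \<le> 2^(i+1) * (1 - (1/2)^f)" using Kf by (intro mult_left_mono) auto
    then show ?thesis using sum1 by (simp add: algebra_simps)
  qed
  show ?thesis
  proof (cases "f \<le> i + 1")
    case True
    then obtain t where it: "i + 1 = f + t" using le_Suc_ex by blast
    have "(2::real)^(i+1) = 2^f * 2^t" by (simp only: it power_add)
    then have pt: "2^(i+1) * (1/2::real)^f = 2^t" by (simp add: power_one_over)
    have tt: "real t \<le> 2^t - 1" using two_pow_ge[of t] by simp
    have "W * real t \<le> w * real t" using Ww by (intro mult_right_mono) auto
    also have "\<dots> \<le> w * (2^t - 1)" using tt w0 by (intro mult_left_mono) auto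
    finally have wt: "W * real t \<le> w * (2^t - 1)" .
    have "real (i + 1) = real (f + t)" using it by simp
    then have rel: "real i + 1 = real f + real t" by simp
    have "w * (real n * (real i + 2) - 2^(i+1) + 2^t) \<le> w * real (\<Sum>x\<in>A. e x)"
      using base pt w0 by (intro mult_left_mono) auto
    then show ?thesis using wt rel unfolding n_def[symmetric] by (simp add: algebra_simps)
  next
    case False
    have pos: "0 < 2^(i+1) * (1/2::real)^f" by simp
    define N0 where "N0 = n * (i + 2) - 2^(i+1)"
    have nge: "2^(i+1) \<le> n * (i + 2)"
    proof -
      have "2^(i+1) \<le> 2^i * (i + 2)" by simp
      also have "\<dots> \<le> n * (i + 2)" using cardA by (intro mult_le_mono1) (simp add: n_def)
      finally show ?thesis .
    qed
    have rN0: "real N0 = real n * (real i + 2) - 2^(i+1)"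
      using nge by (simp add: N0_def of_nat_diff algebra_simps)
    have "real N0 < real (\<Sum>x\<in>A. e x)" using base pos rN0 by linarith
    then have "N0 + 1 \<le> (\<Sum>x\<in>A. e x)" by linarith
    then have "real (N0 + 1) \<le> real (\<Sum>x\<in>A. e x)" by (simp only: of_nat_le_iff)
    then have "real N0 + 1 \<le> real (\<Sum>x\<in>A. e x)" by (simp only: of_nat_add of_nat_1)
    then have "real n * (real i + 2) - 2^(i+1) + 1 \<le> real (\<Sum>x\<in>A. e x)"
      using rN0 by linarith
    then have a: "w * (real n * (real i + 2) - 2^(i+1) + 1) \<le> w * real (\<Sum>x\<in>A. e x)"
      using w0 by (intro mult_left_mono) auto
    have b: "W * (real i + 1) \<le> W * real f" using False W0 by (intro mult_left_mono) auto
    show ?thesis using a b unfolding n_def by simp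
  qed
qed

lemma half_scale: "a \<le> N \<Longrightarrow> (1/2::real)^a * 2^N = 2^(N - a)"
proof -
  assume "a \<le> N"
  then have "(2::real)^N = 2^(N - a) * 2^a" by (simp flip: power_add)
  then show ?thesis by (simp add: power_one_over)
qed

lemma modify:
  fixes A :: "'a set" and l :: "'a \<Rightarrow> nat" and w W \<kappa> :: real
  assumes fin: "finite A" and ne: "A \<noteq> {}"
    and kl: "(1/2)^(Suc m) < \<kappa>" and ku: "\<kappa> \<le> (1/2)^m"
    and kr: "(\<Sum>x\<in>A. (1/2::real)^(l x)) + \<kappa> \<le> (1/2)^D"
    and W0: "0 \<le> W" and Ww: "W \<le> w"
  shows "\<exists>l2 m2. (\<Sum>x\<in>A. (1/2::real)^(l2 x)) + (1/2)^m2 \<le> (1/2)^D \<and>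
      w * real (\<Sum>x\<in>A. l2 x) + W * real m2 \<le> w * real (\<Sum>x\<in>A. l x) + W * real m"
proof (cases "(\<Sum>x\<in>A. (1/2::real)^(l x)) + (1/2)^m \<le> (1/2)^D")
  case True
  then show ?thesis by blast
next
  case False
  define S where "S = (\<Sum>x\<in>A. (1/2::real)^(l x))"
  define L where "L = Max (l ` A)"
  have Lin: "L \<in> l ` A" unfolding L_def using fin ne by (intro Max_in) auto
  then obtain x0 where x0: "x0 \<in> A" "l x0 = L" by auto
  have leL: "x \<in> A \<Longrightarrow> l x \<le> L" for x unfolding L_def using fin by (intro Max_ge) auto
  have Spos: "0 < S" unfolding S_def using fin ne by (intro sum_pos) auto
  have "(1/2::real)^(Suc m) < (1/2)^D" using kl kr Spos by (simp add: S_def)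
  moreover have "((1/2::real)^(Suc m) < (1/2)^D) = (D < Suc m)"
    by (rule power_strict_decreasing_iff) simp_all
  ultimately have Dm: "D \<le> m" by simp
  define N where "N = max L (Suc m)"
  have LN: "L \<le> N" and mN: "Suc m \<le> N" and DN: "D \<le> N" using Dm by (auto simp: N_def)
  define Z where "Z = (\<Sum>x\<in>A. (2::nat)^(N - l x))"
  have SZ: "S * 2^N = real Z"
    unfolding S_def Z_def sum_distrib_right of_nat_sum
  proof (rule sum.cong)
    fix x assume "x \<in> A"
    then have "l x \<le> N" using leL LN by (meson le_trans)
    then show "(1/2::real)^(l x) * 2^N = real (2^(N - l x))" by (simp add: half_scale)
  qed simp
  have "S * 2^N + \<kappa> * 2^N \<le> (1/2)^D * 2^N"
    using kr by (simp add: S_def flip: distrib_right)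
  moreover have "(1/2::real)^(Suc m) * 2^N < \<kappa> * 2^N" using kl by simp
  ultimately have "real Z + 2^(N - Suc m) < 2^(N - D)"
    using SZ half_scale[OF mN] half_scale[OF DN] by linarith
  then have "real (Z + 2^(N - Suc m)) < real ((2::nat)^(N - D))" by simp
  then have Zb: "Z + 2^(N - Suc m) + 1 \<le> 2^(N - D)" by (simp only: of_nat_less_iff)
  have Lm: "Suc m \<le> L"
  proof (rule ccontr)
    assume "\<not> Suc m \<le> L"
    then have NN: "N = Suc m" by (simp add: N_def)
    with Zb have "Z + 2 \<le> 2^(Suc m - D)" by simp
    then have "real (Z + 2) \<le> real ((2::nat)^(Suc m - D))" by (simp only: of_nat_le_iff)
    then have "real Z + 2 \<le> 2^(Suc m - D)" by simp
    then have "S * 2^(Suc m) + (1/2)^m * 2^(Suc m) \<le> (1/2)^D * 2^(Suc m)"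
      using SZ NN half_scale[of D "Suc m"] Dm by (simp add: power_one_over)
    then have "S + (1/2)^m \<le> (1/2::real)^D"
      by (simp flip: distrib_right)
    with False show False by (simp add: S_def)
  qed
  then have NL: "N = L" by (simp add: N_def)
  have L1: "1 \<le> L" using Lm by simp
  have "real (Z + 2^(L - Suc m) + 1) \<le> real ((2::nat)^(L - D))"
    using Zb NL by (simp only: of_nat_le_iff)
  then have "real Z + 2^(L - Suc m) + 1 \<le> 2^(L - D)" by simp
  then have hh: "S * 2^L + (1/2)^(Suc m) * 2^L + (1/2)^L * 2^L \<le> (1/2)^D * 2^L"
    using SZ NL half_scale[OF Lm] half_scale[of D L] Dm Lm by (simp add: power_one_over)
  define B where "B = (1/2::real)^(Suc m)"
  define C where "C = (1/2::real)^L"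
  define E where "E = (1/2::real)^D"
  define T where "T = (2::real)^L"
  have "(S + C + B) * T \<le> E * T" using hh unfolding B_def[symmetric] C_def[symmetric] E_def[symmetric] T_def[symmetric]
    by (simp add: algebra_simps)
  moreover have "0 < T" by (simp add: T_def)
  ultimately have "S + C + B \<le> E" by simp
  then have newk: "S + (1/2)^L + (1/2::real)^(Suc m) \<le> (1/2)^D" by (simp add: B_def C_def E_def)
  define l2 where "l2 = l(x0 := L - 1)"
  have Arem: "A = insert x0 (A - {x0})" using x0 by auto
  have s1: "(\<Sum>x\<in>A. (1/2::real)^(l2 x)) = S + (1/2)^L"
  proof -
    have "(\<Sum>x\<in>A. (1/2::real)^(l2 x)) = (1/2)^(l2 x0) + (\<Sum>x\<in>A - {x0}. (1/2::real)^(l2 x))"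
      by (rule sum.remove[OF fin x0(1)])
    also have "(\<Sum>x\<in>A - {x0}. (1/2::real)^(l2 x)) = (\<Sum>x\<in>A - {x0}. (1/2::real)^(l x))"
      by (rule sum.cong) (auto simp: l2_def)
    finally have "(\<Sum>x\<in>A. (1/2::real)^(l2 x)) = (1/2)^(L - 1) + (\<Sum>x\<in>A - {x0}. (1/2::real)^(l x))"
      by (simp add: l2_def)
    moreover have "S = (1/2)^L + (\<Sum>x\<in>A - {x0}. (1/2::real)^(l x))"
      unfolding S_def using sum.remove[OF fin x0(1), of "\<lambda>x. (1/2::real)^(l x)"] x0 by simp
    moreover have "(1/2::real)^(L - 1) = 2 * (1/2)^L"
    proof -
      have "L = Suc (L - 1)" using L1 by simp
      then have "(1/2::real)^L = (1/2)^(L-1) / 2" by (metis power_Suc2 divide_inverse inverse_eq_divide mult.commute mult_1 times_divide_eq_left)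
      then show ?thesis by simp
    qed
    ultimately show ?thesis by simp
  qed
  have s2: "(\<Sum>x\<in>A. l2 x) + 1 = (\<Sum>x\<in>A. l x)"
  proof -
    have "(\<Sum>x\<in>A. l2 x) = l2 x0 + (\<Sum>x\<in>A - {x0}. l2 x)"
      by (rule sum.remove[OF fin x0(1)])
    also have "(\<Sum>x\<in>A - {x0}. l2 x) = (\<Sum>x\<in>A - {x0}. l x)"
      by (rule sum.cong) (auto simp: l2_def)
    finally have "(\<Sum>x\<in>A. l2 x) = (L - 1) + (\<Sum>x\<in>A - {x0}. l x)"
      by (simp add: l2_def)
    moreover have "(\<Sum>x\<in>A. l x) = L + (\<Sum>x\<in>A - {x0}. l x)"
      using sum.remove[OF fin x0(1), of l] x0 by simp
    ultimately show ?thesis using L1 by simp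
  qed
  have "w * real (\<Sum>x\<in>A. l2 x) + W * real (Suc m) \<le> w * real (\<Sum>x\<in>A. l x) + W * real m"
  proof -
    have "real (\<Sum>x\<in>A. l x) = real (\<Sum>x\<in>A. l2 x) + 1"
      using s2 by (metis of_nat_1 of_nat_add)
    then show ?thesis using Ww by (simp add: algebra_simps)
  qed
  moreover have "(\<Sum>x\<in>A. (1/2::real)^(l2 x)) + (1/2)^(Suc m) \<le> (1/2)^D"
    using s1 newk by simp
  ultimately show ?thesis by blast
qed

lemma lin_pow: "a + t \<le> a * (2::nat)^t" if "1 \<le> a"
proof (induction t)
  case 0 then show ?case by simp
next
  case (Suc t)
  have "a + Suc t \<le> a * 2^t + 1" using Suc by simp
  also have "\<dots> \<le> a * 2^t + a * 2^t" using that by simp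
  finally show ?case by simp
qed

context tdgd
begin

lemma q_le: "q \<le> 1/4"
proof -
  have "(2::real)^2 \<le> 2^k" using k2 by (intro power_increasing) auto
  then show ?thesis by (simp add: q_def field_simps)
qed

lemma q_KK: "q * real KK = 1" by (simp add: q_def KK_def)

definition Wenn :: "nat \<Rightarrow> ennreal" where
  "Wenn s = (\<integral>\<^sup>+x. indicator (Sset (Suc s)) x * ennreal (wt x) \<partial>count_space UNIV)"

lemma sum_Ablk_wt: "(\<Sum>x\<in>Ablk t. ennreal (wt x)) = ennreal (real (Suc t) * q^t)"
proof -
  have "(\<Sum>x\<in>Ablk t. ennreal (wt x)) = ennreal (\<Sum>x\<in>Ablk t. wt x)"
    by (rule sum_ennreal) (rule wt_nonneg)
  also have "(\<Sum>x\<in>Ablk t. wt x) = (\<Sum>x\<in>Ablk t. q^t)" by (rule sum.cong) (simp_all add: Ablk_wt)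
  also have "\<dots> = real (Suc t) * q^t" by (simp add: card_Ablk)
  finally show ?thesis .
qed

lemma W_bound:
  assumes "s < s0"
  shows "Wenn s \<le> ennreal (q^s)"
proof -
  define c where "c = real (s + 2) * q^(Suc s)"
  have q0: "0 < q" by (rule q_pos)
  have q2: "2 * q < 1" using q_le by simp
  have sg: "summable (\<lambda>t. (2 * q)^t)" using q0 q2 by (intro summable_geometric) simp
  have "Wenn s = (\<Sum>t. ennreal (real (Suc (Suc s + t)) * q^(Suc s + t)))"
    unfolding Wenn_def by (subst nn_sum) (simp add: sum_Ablk_wt)
  also have "\<dots> \<le> (\<Sum>t. ennreal (c * (2 * q)^t))"
  proof (rule suminf_le)
    fix t
    have "s + 2 + t \<le> (s + 2) * 2^t" by (rule lin_pow) simp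
    then have "real (s + 2 + t) \<le> real ((s + 2) * 2^t)" by (simp only: of_nat_le_iff)
    then have "real (Suc (Suc s + t)) \<le> real (s + 2) * 2^t" by (simp add: algebra_simps)
    then have "real (Suc (Suc s + t)) * q^(Suc s + t) \<le> real (s + 2) * 2^t * q^(Suc s + t)"
      using q0 by (intro mult_right_mono) auto
    also have "\<dots> = c * (2 * q)^t" by (simp add: c_def power_add power_mult_distrib)
    finally show "ennreal (real (Suc (Suc s + t)) * q^(Suc s + t)) \<le> ennreal (c * (2 * q)^t)"
      by (rule ennreal_leI)
  qed auto
  also have "(\<Sum>t. ennreal (c * (2 * q)^t)) = ennreal (\<Sum>t. c * (2 * q)^t)"
  proof (rule suminf_ennreal2)
    show "0 \<le> c * (2 * q)^t" for t using q0 by (simp add: c_def)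
    show "summable (\<lambda>t. c * (2 * q)^t)" by (rule summable_mult[OF sg])
  qed
  also have "(\<Sum>t. c * (2 * q)^t) = c / (1 - 2 * q)"
    using q0 q2 by (subst suminf_mult) (simp_all add: suminf_geometric divide_inverse)
  also have "ennreal (c / (1 - 2 * q)) \<le> ennreal (q^s)"
  proof (rule ennreal_leI)
    have sH: "s + 2 \<le> H" using assms by (simp add: s0_def)
    have "real (s + 4) \<le> real KK" using sH H2 KK_H by simp
    then have "real (s + 4) * q \<le> real KK * q" using q0 by (intro mult_right_mono) auto
    then have "real (s + 4) * q \<le> 1" using q_KK by (simp add: mult.commute)
    then have "real (s + 2) * q \<le> 1 - 2 * q" by (simp add: algebra_simps)
    moreover have "c = (real (s + 2) * q) * q^s" by (simp add: c_def)
    ultimately have "c \<le> (1 - 2 * q) * q^s"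
      using q0 by (simp add: mult_right_mono)
    then show "c / (1 - 2 * q) \<le> q^s" using q2 by (simp add: divide_le_eq mult.commute)
  qed
  finally show ?thesis by simp
qed


definition Cst :: real where "Cst = 2^(2*k) / 2^KK"

lemma Cst_pos: "0 < Cst" by (simp add: Cst_def)

lemma tail_Cst:
  assumes "s0 \<le> t"
  shows "q^t * 2^(Lam t) = Cst"
proof -
  have ge: "t + (k - 1) + KK \<le> (t + 2) * k" by (rule tail_Lam_ge[OF assms])
  have LT: "Lam t = (t + 2) * k - KK" using assms by (intro Lam_tail) simp
  have e: "Lam t + KK = k * t + 2 * k" using LT ge by (simp add: algebra_simps)
  have "(2::real)^(Lam t) * 2^KK = 2^(k * t) * 2^(2 * k)"
    by (simp only: e flip: power_add)
  moreover have "q^t = 1 / 2^(k * t)" by (simp add: q_def power_mult power_one_over)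
  ultimately show ?thesis unfolding Cst_def by (simp add: field_simps)
qed

lemma ol_cases: "x \<in> Ablk t \<Longrightarrow> ol x = Lam t \<or> ol x = Suc (Lam t)"
  by (simp add: ol_def our_def Ablk_def)

lemma integrand_split:
  fixes S :: "(nat \<times> nat) set" and f g :: "nat \<times> nat \<Rightarrow> real" and c :: real
  assumes "\<And>x. 0 \<le> f x" "\<And>x. 0 \<le> g x" "0 \<le> c"
  shows "(\<integral>\<^sup>+x. indicator S x * ennreal (f x + c * g x) \<partial>count_space UNIV)
    = (\<integral>\<^sup>+x. indicator S x * ennreal (f x) \<partial>count_space UNIV)
      + ennreal c * (\<integral>\<^sup>+x. indicator S x * ennreal (g x) \<partial>count_space UNIV)"
proof -
  have "(\<integral>\<^sup>+x. indicator S x * ennreal (f x + c * g x) \<partial>count_space UNIV)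
     = (\<integral>\<^sup>+x. indicator S x * ennreal (f x) + ennreal c * (indicator S x * ennreal (g x)) \<partial>count_space UNIV)"
    using assms by (intro nn_integral_cong) (simp add: ennreal_plus ennreal_mult distrib_left mult_ac)
  also have "\<dots> = (\<integral>\<^sup>+x. indicator S x * ennreal (f x) \<partial>count_space UNIV)
      + (\<integral>\<^sup>+x. ennreal c * (indicator S x * ennreal (g x)) \<partial>count_space UNIV)"
    by (rule nn_integral_add) auto
  also have "(\<integral>\<^sup>+x. ennreal c * (indicator S x * ennreal (g x)) \<partial>count_space UNIV)
      = ennreal c * (\<integral>\<^sup>+x. indicator S x * ennreal (g x) \<partial>count_space UNIV)"
    by (rule nn_integral_cmult) auto
  finally show ?thesis .
qed

lemma tail_step:
  assumes kr: "Kr s0 l \<le> ennreal ((1/2)^(Dd s0))"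
  shows "Cost s0 ol \<le> Cost s0 l"
proof -
  define lam where "lam = 2 * Cst"
  have lam0: "0 \<le> lam" using Cst_pos by (simp add: lam_def)
  have pw: "wt x * real (ol x) + lam * (1/2)^(ol x) \<le> wt x * real (l x) + lam * (1/2)^(l x)"
    if "x \<in> Sset s0" for x
  proof -
    define t where "t = fst x + snd x"
    have t0: "s0 \<le> t" using that by (simp add: t_def Sset_def)
    have xA: "x \<in> Ablk t" by (simp add: t_def Ablk_def)
    have w: "wt x = q^t" by (simp add: wt_def t_def)
    have C: "q^t * 2^(Lam t) = Cst" by (rule tail_Cst[OF t0])
    have bnd: "lam / 2 \<le> q^t * 2^(ol x) \<and> q^t * 2^(ol x) \<le> lam"
      using ol_cases[OF xA] C Cst_pos by (auto simp: lam_def)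
    show ?thesis unfolding w
      by (rule lagr) (use q_pos bnd in auto)
  qed
  define F where "F l' = (\<integral>\<^sup>+x. indicator (Sset s0) x * ennreal (wt x * real (l' x) + lam * (1/2)^(l' x)) \<partial>count_space UNIV)" for l'
  have Fs: "F l' = Cost s0 l' + ennreal lam * Kr s0 l'" for l'
    unfolding F_def Cost_def Kr_def
    by (rule integrand_split) (use wt_nonneg lam0 in auto)
  have "F ol \<le> F l"
    unfolding F_def
  proof (rule nn_integral_mono)
    fix x
    show "indicator (Sset s0) x * ennreal (wt x * real (ol x) + lam * (1/2)^(ol x))
        \<le> indicator (Sset s0) x * ennreal (wt x * real (l x) + lam * (1/2)^(l x))"
      using pw[of x] by (cases "x \<in> Sset s0") (auto intro: ennreal_leI)
  qed
  then have "Cost s0 ol + ennreal lam * ennreal ((1/2)^(Dd s0)) \<le> Cost s0 l + ennreal lam * Kr s0 l"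
    unfolding Fs Kr_tail .
  also have "\<dots> \<le> Cost s0 l + ennreal lam * ennreal ((1/2)^(Dd s0))"
    using kr by (intro add_left_mono mult_left_mono) auto
  finally have "Cost s0 ol + ennreal (lam * (1/2)^(Dd s0)) \<le> Cost s0 l + ennreal (lam * (1/2)^(Dd s0))"
    using lam0 by (simp add: ennreal_mult)
  then show ?thesis by (simp add: ennreal_add_left_cancel_le add.commute[of "Cost s0 _"])
qed


lemma exists_m:
  fixes \<kappa> :: real
  assumes "0 < \<kappa>" "\<kappa> \<le> 1"
  shows "\<exists>m. (1/2)^(Suc m) < \<kappa> \<and> \<kappa> \<le> (1/2)^m"
proof -
  obtain n where n: "(1/2::real)^n < \<kappa>" using real_arch_pow_inv[OF assms(1), of "1/2"] by auto
  define n0 where "n0 = (LEAST n. (1/2::real)^n < \<kappa>)"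
  have n0: "(1/2::real)^n0 < \<kappa>" unfolding n0_def by (rule LeastI[of _ n]) (rule n)
  have "n0 \<noteq> 0"
  proof
    assume "n0 = 0"
    with n0 assms show False by simp
  qed
  then obtain m where m: "n0 = Suc m" by (cases n0) auto
  have "\<not> (1/2::real)^m < \<kappa>"
  proof
    assume "(1/2::real)^m < \<kappa>"
    then have "n0 \<le> m" unfolding n0_def by (rule Least_le)
    with m show False by simp
  qed
  then show ?thesis using n0 m by auto
qed

lemma half_pow_le_iff: "((1/2::real)^a \<le> (1/2)^b) = (b \<le> a)"
  by (rule power_decreasing_iff) simp_all

lemma chain_step:
  assumes ss: "s < s0"
    and IH: "\<And>l'. Kr (Suc s) l' \<le> ennreal ((1/2)^(Dd (Suc s))) \<Longrightarrow> Cost (Suc s) ol \<le> Cost (Suc s) l'"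
    and kr: "Kr s l \<le> ennreal ((1/2)^(Dd s))"
  shows "Cost s ol \<le> Cost s l"
proof -
  define D where "D = Dd s"
  define D1 where "D1 = Dd (Suc s)"
  define i where "i = lg s"
  define j where "j = Suc s - 2^i"
  define w where "w = q^s"
  have w0: "0 < w" using q_pos by (simp add: w_def)
  have hf: "Lam s = D + i" "D1 = D + i + 1" "Suc s - Acnt s = 2 * j + 1"
    using head_facts[OF ss] by (simp_all add: D_def D1_def i_def j_def)
  have P1: "2^i \<le> Suc s" "Suc s < 2 * 2^i" using lg_le[of s] lg_gt[of s] by (simp_all add: i_def)
  have card: "card (Ablk s) = 2^i + j" "j < 2^i" using P1 by (simp_all add: card_Ablk j_def)
  define KA where "KA = (\<Sum>x\<in>Ablk s. (1/2::real)^(l x))"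
  have KA0: "0 \<le> KA" unfolding KA_def by (rule sum_nonneg) simp
  define K' where "K' = Kr (Suc s) l"
  have krs: "Kr s l = ennreal KA + K'" unfolding KA_def K'_def by (rule Kr_split)
  have "K' \<le> Kr s l" unfolding krs by (rule add_increasing) auto
  then have K'le: "K' \<le> ennreal ((1/2)^D)" using kr by (simp add: D_def)
  then have K'fin: "K' \<noteq> top" by (metis ennreal_neq_top neq_top_trans)
  define \<kappa> where "\<kappa> = enn2real K'"
  have K'k: "K' = ennreal \<kappa>" using K'fin by (simp add: \<kappa>_def ennreal_enn2real_if)
  have k0: "0 \<le> \<kappa>" by (simp add: \<kappa>_def)
  have "ennreal (KA + \<kappa>) \<le> ennreal ((1/2)^D)"
    using kr krs K'k KA0 k0 by (simp add: D_def ennreal_plus)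
  then have krr: "KA + \<kappa> \<le> (1/2)^D" by (subst (asm) ennreal_le_iff) auto
  have pt: "(1/2::real)^(l x) \<le> \<kappa>" if "x \<in> Sset (Suc s)" for x
  proof -
    have "ennreal ((1/2)^(l x)) \<le> K'" unfolding K'_def Kr_def
      by (rule nn_point[OF that, where g="\<lambda>x. ennreal ((1/2)^(l x))"])
    then show ?thesis unfolding K'k by (subst (asm) ennreal_le_iff) (use k0 in auto)
  qed
  have kpos: "0 < \<kappa>"
  proof -
    have "(Suc s, 0) \<in> Sset (Suc s)" by (simp add: Sset_def)
    from pt[OF this] show ?thesis by (meson less_le_trans zero_less_divide_1_iff zero_less_numeral zero_less_power)
  qed
  have k1: "\<kappa> \<le> 1"
  proof -
    have "(1/2::real)^D \<le> 1" by (simp add: power_le_one)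
    then show ?thesis using krr KA0 by linarith
  qed
  obtain m where m: "(1/2)^(Suc m) < \<kappa>" "\<kappa> \<le> (1/2)^m" using exists_m[OF kpos k1] by blast
  have lm: "m \<le> l x" if "x \<in> Sset (Suc s)" for x
    using pt[OF that] m(2) half_pow_le_iff[of "l x" m] by linarith
  define l' where "l' x = l x - m + D1" for x
  have kr': "Kr (Suc s) l' \<le> ennreal ((1/2)^D1)"
  proof -
    have "Kr (Suc s) l' = (\<integral>\<^sup>+x. ennreal (2^m * (1/2)^D1) * (indicator (Sset (Suc s)) x * ennreal ((1/2)^(l x))) \<partial>count_space UNIV)"
      unfolding Kr_def
    proof (rule nn_integral_cong)
      fix x
      show "indicator (Sset (Suc s)) x * ennreal ((1/2::real)^(l' x))
          = ennreal (2^m * (1/2)^D1) * (indicator (Sset (Suc s)) x * ennreal ((1/2)^(l x)))"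
      proof (cases "x \<in> Sset (Suc s)")
        case True
        have "l' x + m = l x + D1" using lm[OF True] by (simp add: l'_def)
        then have "(1/2::real)^(l' x) * (1/2)^m = (1/2)^(l x) * (1/2)^D1" by (simp flip: power_add)
        then have "(1/2::real)^(l' x) = 2^m * (1/2)^D1 * (1/2)^(l x)"
          by (simp add: field_simps power_one_over)
        then show ?thesis using True by (simp add: ennreal_mult)
      qed simp
    qed
    also have "\<dots> = ennreal (2^m * (1/2)^D1) * K'"
      unfolding K'_def Kr_def by (rule nn_integral_cmult) auto
    also have "\<dots> = ennreal (2^m * (1/2)^D1 * \<kappa>)" using k0 by (simp add: K'k ennreal_mult)
    also have "\<dots> \<le> ennreal ((1/2)^D1)"
    proof (rule ennreal_leI)
      have "2^m * \<kappa> \<le> (2::real)^m * (1/2)^m" using m(2) by (intro mult_left_mono) auto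
      also have "\<dots> = 1" by (simp add: power_one_over)
      finally have "2^m * \<kappa> \<le> 1" .
      then have "(1/2)^D1 * (2^m * \<kappa>) \<le> (1/2::real)^D1 * 1" by (intro mult_left_mono) auto
      then show "2^m * (1/2)^D1 * \<kappa> \<le> (1/2::real)^D1" by (simp add: mult_ac)
    qed
    finally show ?thesis .
  qed
  have IH': "Cost (Suc s) ol \<le> Cost (Suc s) l'" by (rule IH) (simp add: D1_def[symmetric] kr')
  have Wb: "Wenn s \<le> ennreal w" using W_bound[OF ss] by (simp add: w_def)
  define W where "W = enn2real (Wenn s)"
  have Wfin: "Wenn s \<noteq> top" using Wb by (metis ennreal_neq_top neq_top_trans)
  have WW: "Wenn s = ennreal W" using Wfin by (simp add: W_def ennreal_enn2real_if)
  have W0: "0 \<le> W" by (simp add: W_def)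
  have Ww: "W \<le> w" using Wb WW w0 by (simp add: ennreal_le_iff)
  have costrel: "Cost (Suc s) l' + ennreal (real m * W) = Cost (Suc s) l + ennreal (real D1 * W)"
  proof -
    have a: "(\<integral>\<^sup>+x. indicator (Sset (Suc s)) x * ennreal (wt x * real (l' x) + real m * wt x) \<partial>count_space UNIV)
        = Cost (Suc s) l' + ennreal (real m) * Wenn s"
      unfolding Cost_def Wenn_def by (rule integrand_split) (use wt_nonneg in auto)
    have b: "(\<integral>\<^sup>+x. indicator (Sset (Suc s)) x * ennreal (wt x * real (l x) + real D1 * wt x) \<partial>count_space UNIV)
        = Cost (Suc s) l + ennreal (real D1) * Wenn s"
      unfolding Cost_def Wenn_def by (rule integrand_split) (use wt_nonneg in auto)
    have c: "(\<integral>\<^sup>+x. indicator (Sset (Suc s)) x * ennreal (wt x * real (l' x) + real m * wt x) \<partial>count_space UNIV)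
        = (\<integral>\<^sup>+x. indicator (Sset (Suc s)) x * ennreal (wt x * real (l x) + real D1 * wt x) \<partial>count_space UNIV)"
    proof (rule nn_integral_cong)
      fix x
      show "indicator (Sset (Suc s)) x * ennreal (wt x * real (l' x) + real m * wt x)
          = indicator (Sset (Suc s)) x * ennreal (wt x * real (l x) + real D1 * wt x)"
      proof (cases "x \<in> Sset (Suc s)")
        case True
        have "real (l' x) + real m = real (l x) + real D1" using lm[OF True] by (simp add: l'_def)
        then have "wt x * (real (l' x) + real m) = wt x * (real (l x) + real D1)" by simp
        then have "wt x * real (l' x) + real m * wt x = wt x * real (l x) + real D1 * wt x"
          by (simp add: distrib_left mult.commute)
        then show ?thesis by simp
      qed simp
    qed
    have e1: "ennreal (real m * W) = ennreal (real m) * Wenn s" using W0 WW by (simp add: ennreal_mult)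
    have e2: "ennreal (real D1 * W) = ennreal (real D1) * Wenn s" using W0 WW by (simp add: ennreal_mult)
    show ?thesis unfolding e1 e2 by (simp only: a[symmetric] b[symmetric] c)
  qed
  have "(0, s) \<in> Ablk s" by (simp add: Ablk_def)
  then have Ane: "Ablk s \<noteq> {}" by blast
  have krr': "(\<Sum>x\<in>Ablk s. (1/2::real)^(l x)) + \<kappa> \<le> (1/2)^D" using krr by (simp add: KA_def)
  from modify[OF finite_Ablk Ane m(1) m(2) krr' W0 Ww]
  obtain l2 m2 where mod1: "(\<Sum>x\<in>Ablk s. (1/2::real)^(l2 x)) + (1/2)^m2 \<le> (1/2)^D"
    and mod2: "w * real (\<Sum>x\<in>Ablk s. l2 x) + W * real m2 \<le> w * real (\<Sum>x\<in>Ablk s. l x) + W * real m"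
    by blast
  have Dl2: "D \<le> l2 x" if "x \<in> Ablk s" for x
  proof -
    have "(1/2::real)^(l2 x) \<le> (\<Sum>x\<in>Ablk s. (1/2::real)^(l2 x))"
      by (rule member_le_sum) (use that in auto)
    moreover have "0 \<le> (1/2::real)^m2" by simp
    ultimately have "(1/2::real)^(l2 x) \<le> (1/2)^D" using mod1 by linarith
    then show ?thesis by (simp add: half_pow_le_iff)
  qed
  have Dm2: "D \<le> m2"
  proof -
    have "0 \<le> (\<Sum>x\<in>Ablk s. (1/2::real)^(l2 x))" by (rule sum_nonneg) simp
    then have "(1/2::real)^m2 \<le> (1/2)^D" using mod1 by linarith
    then show ?thesis by (simp add: half_pow_le_iff)
  qed
  define e where "e x = l2 x - D" for x
  define f where "f = m2 - D"
  have ekr: "(\<Sum>x\<in>Ablk s. (1/2::real)^(e x)) + (1/2)^f \<le> 1"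
  proof -
    have "(1/2::real)^D * ((\<Sum>x\<in>Ablk s. (1/2::real)^(e x)) + (1/2)^f)
        = (\<Sum>x\<in>Ablk s. (1/2::real)^(l2 x)) + (1/2)^m2"
    proof -
      have "(1/2::real)^D * (\<Sum>x\<in>Ablk s. (1/2::real)^(e x)) = (\<Sum>x\<in>Ablk s. (1/2::real)^(l2 x))"
        unfolding sum_distrib_left
        by (rule sum.cong) (simp_all add: e_def Dl2 flip: power_add)
      moreover have "(1/2::real)^D * (1/2)^f = (1/2)^m2" using Dm2 by (simp add: f_def flip: power_add)
      ultimately show ?thesis by (simp add: distrib_left)
    qed
    then have "(1/2::real)^D * ((\<Sum>x\<in>Ablk s. (1/2::real)^(e x)) + (1/2)^f) \<le> (1/2)^D * 1"
      using mod1 by simp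
    then show ?thesis by (subst (asm) mult_le_cancel_left_pos) simp_all
  qed
  have lc: "w * (real (card (Ablk s)) * (real i + 2) - 2^(i+1) + 1) + W * (real i + 1)
       \<le> w * real (\<Sum>x\<in>Ablk s. e x) + W * real f"
    by (rule local_clean[OF finite_Ablk card ekr W0 Ww])
  have sl2: "(\<Sum>x\<in>Ablk s. l2 x) = card (Ablk s) * D + (\<Sum>x\<in>Ablk s. e x)"
  proof -
    have "(\<Sum>x\<in>Ablk s. l2 x) = (\<Sum>x\<in>Ablk s. D + e x)"
      by (rule sum.cong) (simp_all add: e_def Dl2)
    then show ?thesis by (simp add: sum.distrib)
  qed
  have m2f: "m2 = D + f" using Dm2 by (simp add: f_def)
  define n where "n = card (Ablk s)"
  have our_sum: "(\<Sum>x\<in>Ablk s. wt x * real (ol x)) = w * (real n * real D + (real n * (real i + 2) - 2^(i+1) + 1))"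
  proof -
    have "(\<Sum>x\<in>Ablk s. wt x * real (ol x)) = (\<Sum>x\<in>Ablk s. w * real (ol x))"
      by (rule sum.cong) (simp_all add: Ablk_wt w_def)
    also have "\<dots> = w * (\<Sum>x\<in>Ablk s. real (ol x))" by (simp add: sum_distrib_left)
    also have "(\<Sum>x\<in>Ablk s. real (ol x)) = real (Acnt s) * real (Lam s) + real (Suc s - Acnt s) * real (Suc (Lam s))"
      by (rule sum_our[OF Acnt_le])
    also have "\<dots> = real (Suc s) * real (Lam s) + real (Suc s - Acnt s)"
      using Acnt_le[of s] by (simp add: of_nat_diff algebra_simps)
    also have "\<dots> = real n * real D + (real n * (real i + 2) - 2^(i+1) + 1)"
    proof -
      have nn: "real n = 2^i + real j" using card by (simp add: n_def)
      have "real (Suc s) = real n" by (simp add: n_def card_Ablk)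
      moreover have "real (Lam s) = real D + real i" using hf by simp
      moreover have "real (Suc s - Acnt s) = 2 * real j + 1" using hf by simp
      ultimately show ?thesis using nn by (simp add: algebra_simps)
    qed
    finally show ?thesis .
  qed
  have loc: "(\<Sum>x\<in>Ablk s. wt x * real (ol x)) + W * real D1
      \<le> w * real (\<Sum>x\<in>Ablk s. l x) + W * real m"
  proof -
    have "(\<Sum>x\<in>Ablk s. wt x * real (ol x)) + W * real D1
        = w * real n * real D + W * real D + (w * (real n * (real i + 2) - 2^(i+1) + 1) + W * (real i + 1))"
      using our_sum hf by (simp add: algebra_simps)
    also have "\<dots> \<le> w * real n * real D + W * real D + (w * real (\<Sum>x\<in>Ablk s. e x) + W * real f)"
      using lc by (simp add: n_def)
    also have "\<dots> = w * real (\<Sum>x\<in>Ablk s. l2 x) + W * real m2"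
      using sl2 m2f by (simp add: n_def algebra_simps)
    also have "\<dots> \<le> w * real (\<Sum>x\<in>Ablk s. l x) + W * real m" by (rule mod2)
    finally show ?thesis .
  qed
  have sumw: "(\<Sum>x\<in>Ablk s. wt x * real (l x)) = w * real (\<Sum>x\<in>Ablk s. l x)"
    by (simp add: sum_distrib_left Ablk_wt w_def)
  have nn1: "0 \<le> (\<Sum>x\<in>Ablk s. wt x * real (ol x))" by (rule sum_nonneg) (simp add: wt_nonneg)
  have nn2: "0 \<le> w * real (\<Sum>x\<in>Ablk s. l x)" using w0 by (intro mult_nonneg_nonneg less_imp_le[OF w0] of_nat_0_le_iff)
  have "Cost s ol + ennreal (real D1 * W)
      = ennreal ((\<Sum>x\<in>Ablk s. wt x * real (ol x)) + W * real D1) + Cost (Suc s) ol"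
    using nn1 W0 by (simp add: Cost_split[of s ol] ennreal_plus mult.commute add_ac)
  also have "\<dots> \<le> ennreal (w * real (\<Sum>x\<in>Ablk s. l x) + W * real m) + Cost (Suc s) l'"
    by (rule add_mono[OF ennreal_leI[OF loc] IH'])
  also have "\<dots> = ennreal (w * real (\<Sum>x\<in>Ablk s. l x)) + (Cost (Suc s) l' + ennreal (real m * W))"
    using nn2 W0 by (simp add: ennreal_plus mult.commute add_ac)
  also have "\<dots> = Cost s l + ennreal (real D1 * W)"
    unfolding costrel Cost_split[of s l] sumw by (simp add: add_ac)
  finally show ?thesis by (simp add: ennreal_add_left_cancel_le add.commute[of "Cost s _"])
qed

end

context tdgd
begin

theorem LB: "s \<le> s0 \<Longrightarrow> Kr s l \<le> ennreal ((1/2)^(Dd s)) \<Longrightarrow> Cost s ol \<le> Cost s l"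
proof (induction "s0 - s" arbitrary: s l)
  case 0 then have "s = s0" by simp
  then show ?case using 0 tail_step by simp
next
  case (Suc d)
  then have ss: "s < s0" by simp
  have dd: "d = s0 - Suc s" using Suc.hyps(2) by simp
  show ?case
  proof (rule chain_step[OF ss])
    fix l' assume "Kr (Suc s) l' \<le> ennreal ((1/2)^(Dd (Suc s)))"
    then show "Cost (Suc s) ol \<le> Cost (Suc s) l'" using Suc.hyps(1)[OF dd] ss by simp
  next
    show "Kr s l \<le> ennreal ((1/2)^(Dd s))" by (rule Suc.prems(2))
  qed
qed

lemma s0_pos: "0 < s0" using H2 by (simp add: s0_def)

lemma Dd0: "Dd 0 = 0"
proof -
  have "lg 0 = 0" by (simp add: lg_def)
  then show ?thesis using s0_pos by (simp add: Dd_def Lam_def)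
qed

lemma Dd_ge: "s \<le> s0 \<Longrightarrow> s \<le> Dd s"
proof (induction s)
  case 0 then show ?case by simp
next
  case (Suc s)
  then have "s < s0" by simp
  then show ?case using Suc head_facts(5)[of s] by simp
qed

lemma Lam_ge: "s \<le> Lam s"
proof (cases "s < s0")
  case True
  then show ?thesis using Dd_ge[of s] head_facts(4)[OF True] by simp
next
  case False
  then show ?thesis using tail_facts(6)[of s] by simp
qed

lemma ol_ge: "fst x + snd x \<le> ol x"
  using Lam_ge[of "fst x + snd x"] by (simp add: ol_def our_def)

lemma Kr_ol0: "Kr 0 ol = 1"
  using Kr_our[of 0] Dd0 by simp

lemma ol_code: "\<exists>c. prefix_code c \<and> (\<forall>x. length (c x) = ol x)"
proof (rule code_from_lengths)
  fix L
  have "{x. ol x \<le> L} \<subseteq> {..L} \<times> {..L}"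
  proof (rule subsetI)
    fix x assume "x \<in> {x. ol x \<le> L}"
    then have "fst x + snd x \<le> L" using ol_ge[of x] by simp
    then show "x \<in> {..L} \<times> {..L}" by (cases x) auto
  qed
  then show "finite {x. ol x \<le> L}" by (rule finite_subset) simp
next
  fix F :: "(nat \<times> nat) set" assume F: "finite F"
  have "ennreal (\<Sum>x\<in>F. (1/2::real)^(ol x)) = (\<Sum>x\<in>F. ennreal ((1/2)^(ol x)))"
    by (rule sum_ennreal[symmetric]) simp
  also have "\<dots> = (\<integral>\<^sup>+x. indicator F x * ennreal ((1/2)^(ol x)) \<partial>count_space UNIV)"
    by (rule nn_fin_ind[OF F, symmetric])
  also have "\<dots> \<le> Kr 0 ol" unfolding Kr_def
    by (intro nn_integral_mono) (auto simp: indicator_def)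
  also have "\<dots> = 1" by (rule Kr_ol0)
  finally show "(\<Sum>x\<in>F. (1/2::real)^(ol x)) \<le> 1" by (simp add: ennreal_le_1)
qed

lemma exp_len_Cost:
  "exp_len (TDGD q) c = ennreal ((1 - q)^2) * Cost 0 (\<lambda>x. length (c x))"
proof -
  have "exp_len (TDGD q) c = (\<integral>\<^sup>+x. ennreal ((1 - q)^2) * (indicator (Sset 0) x * ennreal (wt x * real (length (c x)))) \<partial>count_space UNIV)"
    unfolding exp_len_def
  proof (rule nn_integral_cong)
    fix x
    have eq: "TDGD q x * real (length (c x)) = (1 - q)^2 * (wt x * real (length (c x)))"
      by (simp add: TDGD_def wt_def)
    have nn: "0 \<le> wt x * real (length (c x))" using wt_nonneg by simp
    have "ennreal (TDGD q x * real (length (c x))) = ennreal ((1 - q)^2) * ennreal (wt x * real (length (c x)))"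
      unfolding eq by (rule ennreal_mult) (simp_all add: nn)
    then show "ennreal (TDGD q x * real (length (c x))) = ennreal ((1 - q)^2) * (indicator (Sset 0) x * ennreal (wt x * real (length (c x))))"
      by simp
  qed
  also have "\<dots> = ennreal ((1 - q)^2) * Cost 0 (\<lambda>x. length (c x))"
    unfolding Cost_def by (rule nn_integral_cmult) auto
  finally show ?thesis .
qed

lemma optimal:
  assumes len: "\<forall>x. length (c x) = ol x" and pc: "prefix_code c"
  shows "optimal_prefix_code (TDGD q) c"
  unfolding optimal_prefix_code_def
proof (intro conjI allI impI)
  show "prefix_code c" by (rule pc)
  fix c' assume pc': "prefix_code c'"
  have kr: "Kr 0 (\<lambda>x. length (c' x)) \<le> ennreal ((1/2)^(Dd 0))"
    using kraft_integral[OF pc'] Dd0 by (simp add: Kr_def)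
  have "Cost 0 ol \<le> Cost 0 (\<lambda>x. length (c' x))" by (rule LB[OF _ kr]) simp
  moreover have "(\<lambda>x. length (c x)) = ol" using len by auto
  ultimately show "exp_len (TDGD q) c \<le> exp_len (TDGD q) c'"
    unfolding exp_len_Cost by (simp add: mult_left_mono)
qed

lemma cnt_ol:
  assumes len: "\<forall>x. length (c x) = ol x"
  shows "cnt c s (Lam s) = Acnt s" "cnt c s (Lam s + 1) = Suc s - Acnt s"
    "\<forall>a b. a + b = s \<longrightarrow> length (c (a, b)) \<in> {Lam s, Lam s + 1}"
proof -
  have A: "Acnt s \<le> Suc s" by (rule Acnt_le)
  have ol_ab: "a + b = s \<Longrightarrow> ol (a, b) = Lam s + (if a < Acnt s then 0 else 1)" for a b
    by (simp add: ol_def our_def)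
  have inj: "inj_on (\<lambda>a. (a, s - a)) X" for X by (auto simp: inj_on_def)
  have e1: "{(a, b). a + b = s \<and> length (c (a, b)) = Lam s} = (\<lambda>a. (a, s - a)) ` {..<Acnt s}"
  proof (rule set_eqI)
    fix x :: "nat \<times> nat"
    obtain a b where x: "x = (a, b)" by (cases x)
    show "x \<in> {(a, b). a + b = s \<and> length (c (a, b)) = Lam s} \<longleftrightarrow> x \<in> (\<lambda>a. (a, s - a)) ` {..<Acnt s}"
      unfolding x using len ol_ab[of a b] A by (auto simp: image_iff split: if_splits)
  qed
  have e2: "{(a, b). a + b = s \<and> length (c (a, b)) = Lam s + 1} = (\<lambda>a. (a, s - a)) ` {Acnt s..s}"
  proof (rule set_eqI)
    fix x :: "nat \<times> nat"
    obtain a b where x: "x = (a, b)" by (cases x)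
    show "x \<in> {(a, b). a + b = s \<and> length (c (a, b)) = Lam s + 1} \<longleftrightarrow> x \<in> (\<lambda>a. (a, s - a)) ` {Acnt s..s}"
      unfolding x using len ol_ab[of a b] A by (auto simp: image_iff split: if_splits)
  qed
  show "cnt c s (Lam s) = Acnt s" unfolding cnt_def e1 by (simp add: card_image[OF inj])
  show "cnt c s (Lam s + 1) = Suc s - Acnt s" unfolding cnt_def e2 by (simp add: card_image[OF inj])
  show "\<forall>a b. a + b = s \<longrightarrow> length (c (a, b)) \<in> {Lam s, Lam s + 1}"
    using len ol_ab by simp
qed

end

context tdgd
begin

lemma head_match:
  assumes s: "s = 2^i + j - 1" and i: "i \<le> k - 2" and j: "j \<le> 2^i - 1"
  shows "s < s0" "Lam s = (s + 2) * (i + 1) - 2^(i+1)" "Acnt s = 2^i - j - 1" "Suc s - Acnt s = 2 * j + 1"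
proof -
  have P: "1 \<le> (2::nat)^i" by simp
  have s1: "Suc s = 2^i + j" using s P by simp
  have "2^i - 1 < (2::nat)^i" using P by simp
  then have jl: "j < 2^i" using j by (rule le_less_trans[rotated])
  have lt: "Suc s < 2 * 2^i" using s1 jl by simp
  have lgi: "lg s = i" by (rule lg_eqI) (use s1 lt in simp_all)
  have "(2::nat)^(i+1) \<le> 2^(k-1)" using i k2 by (intro power_increasing) auto
  then have "2 * 2^i \<le> H" by (simp add: H_def)
  then show ss: "s < s0" using lt by (simp add: s0_def)
  show "Lam s = (s + 2) * (i + 1) - 2^(i+1)" using Lam_head[OF ss] lgi by simp
  have A: "Acnt s = 2 * 2^i - s - 2" using Acnt_head[OF ss] lgi by simp
  show "Acnt s = 2^i - j - 1" using A s1 by simp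
  show "Suc s - Acnt s = 2 * j + 1" using A s1 jl by simp
qed

lemma tail_match:
  assumes s: "s = 2^(k-1) - 1 + (2^k - 1) * l + j" and j: "j \<le> 2^k - 2"
  shows "\<not> s < s0" "Lam s = (s + 2) * k - 2^k"
    "j + 3 \<le> 2^(k-1) \<Longrightarrow> Acnt s = (2^k - 1) * l + 2^(k-1) - j - 1 \<and> Suc s - Acnt s = 2 * j + 1"
    "j + 2 = 2^(k-1) \<Longrightarrow> Acnt s = (2^k - 1) * l \<and> Suc s - Acnt s = 2^k - 2"
    "2^(k-1) - 1 \<le> j \<and> j + 4 \<le> 2^k \<Longrightarrow> Acnt s = (2^k - 1) * l + 3 * 2^(k-1) - 2 - j \<and> Suc s - Acnt s = 2 * j + 2 - 2^k"
    "j + 3 = 2^k \<Longrightarrow> Acnt s = (2^k - 1) * l + 2^(k-1) + 1 \<and> Suc s - Acnt s = 2^k - 4"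
    "j + 2 = 2^k \<Longrightarrow> Acnt s = (2^k - 1) * l + 2^(k-1) - 1 \<and> Suc s - Acnt s = 2^k - 1"
proof -
  have HH: "2^(k-1) = H" by (simp add: H_def)
  have KKe: "2^k = KK" by (simp add: KK_def)
  define M where "M = (KK - 1) * l"
  have s': "s = H - 1 + (KK - 1) * l + j" using s unfolding HH KKe .
  have sd: "s = s0 + M + j" using s' by (simp add: s0_def M_def)
  have j': "j \<le> KK - 2" using j unfolding KKe .
  have jl: "j < KK - 1" using j' KK4 by simp
  then show ns: "\<not> s < s0" using sd by simp
  show "Lam s = (s + 2) * k - 2^k" using Lam_tail[OF ns] KKe by simp
  have "s - s0 = (KK - 1) * l + j" using sd by (simp add: M_def)
  then have tu: "tu s = l" and tj: "tj s = j" using divmod_eq[OF jl, of l] by (simp_all add: tu_def tj_def)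
  have cc_s: "cc s = (if j + 1 < H then 2 * l + 1 else 2 * l + 2)" by (simp add: cc_def tu tj)
  have lst_s: "lst s \<longleftrightarrow> j + 2 = H \<or> j + 2 = KK" by (simp add: lst_def tj)
  have AT: "Acnt s = (KK - 1) * cc s - Suc s - (if lst s then 1 else 0)" by (rule Acnt_tail[OF ns])
  have M1: "(KK - 1) * (2 * l + 1) = 2 * M + (KK - 1)" by (simp add: M_def algebra_simps)
  have M2: "(KK - 1) * (2 * l + 2) = 2 * M + 2 * (KK - 1)" by (simp add: M_def algebra_simps)
  have s0H: "s0 + 1 = H" using H2 by (simp add: s0_def)
  have KH: "KK = 2 * H" by (rule KK_H)
  note base = sd s0H KH H2 jl
  show "j + 3 \<le> 2^(k-1) \<Longrightarrow> Acnt s = (2^k - 1) * l + 2^(k-1) - j - 1 \<and> Suc s - Acnt s = 2 * j + 1"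
  proof -
    assume a: "j + 3 \<le> 2^(k-1)"
    then have a': "j + 3 \<le> H" unfolding HH .
    then have "cc s = 2 * l + 1" "\<not> lst s" using cc_s lst_s KH by auto
    then have "Acnt s = 2 * M + (KK - 1) - Suc s" using AT M1 by simp
    then show ?thesis unfolding HH KKe M_def[symmetric] using base a' by arith
  qed
  show "j + 2 = 2^(k-1) \<Longrightarrow> Acnt s = (2^k - 1) * l \<and> Suc s - Acnt s = 2^k - 2"
  proof -
    assume a: "j + 2 = 2^(k-1)"
    then have a': "j + 2 = H" unfolding HH .
    then have "cc s = 2 * l + 1" "lst s" using cc_s lst_s KH by auto
    then have "Acnt s = 2 * M + (KK - 1) - Suc s - 1" using AT M1 by simp
    then show ?thesis unfolding HH KKe M_def[symmetric] using base a' by arith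
  qed
  show "2^(k-1) - 1 \<le> j \<and> j + 4 \<le> 2^k \<Longrightarrow> Acnt s = (2^k - 1) * l + 3 * 2^(k-1) - 2 - j \<and> Suc s - Acnt s = 2 * j + 2 - 2^k"
  proof -
    assume a: "2^(k-1) - 1 \<le> j \<and> j + 4 \<le> 2^k"
    then have a': "H - 1 \<le> j" "j + 4 \<le> KK" unfolding HH KKe by simp_all
    then have "cc s = 2 * l + 2" "\<not> lst s" using cc_s lst_s KH H2 by auto
    then have "Acnt s = 2 * M + 2 * (KK - 1) - Suc s" using AT M2 by simp
    then show ?thesis unfolding HH KKe M_def[symmetric] using base a' by arith
  qed
  show "j + 3 = 2^k \<Longrightarrow> Acnt s = (2^k - 1) * l + 2^(k-1) + 1 \<and> Suc s - Acnt s = 2^k - 4"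
  proof -
    assume a: "j + 3 = 2^k"
    then have a': "j + 3 = KK" unfolding KKe .
    then have "cc s = 2 * l + 2" "\<not> lst s" using cc_s lst_s KH H2 by auto
    then have "Acnt s = 2 * M + 2 * (KK - 1) - Suc s" using AT M2 by simp
    then show ?thesis unfolding HH KKe M_def[symmetric] using base a' by arith
  qed
  show "j + 2 = 2^k \<Longrightarrow> Acnt s = (2^k - 1) * l + 2^(k-1) - 1 \<and> Suc s - Acnt s = 2^k - 1"
  proof -
    assume a: "j + 2 = 2^k"
    then have a': "j + 2 = KK" unfolding KKe .
    then have "cc s = 2 * l + 2" "lst s" using cc_s lst_s KH H2 by auto
    then have "Acnt s = 2 * M + 2 * (KK - 1) - Suc s - 1" using AT M2 by simp
    then show ?thesis unfolding HH KKe M_def[symmetric] using base a' by arith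
  qed
qed

end

context tdgd
begin

lemma main_loc:
  shows "\<exists>c. optimal_prefix_code (TDGD (1 / 2 ^ k)) c \<and>
    (\<forall>s i j. s = 2^i + j - 1 \<and> i \<le> k - 2 \<and> j \<le> 2^i - 1 \<longrightarrow>
       (let \<Lambda> = (s + 2) * (i + 1) - 2^(i+1) in
         (\<forall>a b. a + b = s \<longrightarrow> length (c (a, b)) \<in> {\<Lambda>, \<Lambda> + 1}) \<and>
         cnt c s \<Lambda> = 2^i - j - 1 \<and> cnt c s (\<Lambda> + 1) = 2 * j + 1)) \<and>
    (\<forall>s l j. s = 2^(k-1) - 1 + (2^k - 1) * l + j \<and> j \<le> 2^k - 2 \<longrightarrow>
       (let \<Lambda> = (s + 2) * k - 2^k in
         (\<forall>a b. a + b = s \<longrightarrow> length (c (a, b)) \<in> {\<Lambda>, \<Lambda> + 1}) \<and>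
         (j + 3 \<le> 2^(k-1) \<longrightarrow>
            cnt c s \<Lambda> = (2^k - 1) * l + 2^(k-1) - j - 1 \<and> cnt c s (\<Lambda> + 1) = 2 * j + 1) \<and>
         (j + 2 = 2^(k-1) \<longrightarrow>
            cnt c s \<Lambda> = (2^k - 1) * l \<and> cnt c s (\<Lambda> + 1) = 2^k - 2) \<and>
         (2^(k-1) - 1 \<le> j \<and> j + 4 \<le> 2^k \<longrightarrow>
            cnt c s \<Lambda> = (2^k - 1) * l + 3 * 2^(k-1) - 2 - j \<and> cnt c s (\<Lambda> + 1) = 2 * j + 2 - 2^k) \<and>
         (j + 3 = 2^k \<longrightarrow>
            cnt c s \<Lambda> = (2^k - 1) * l + 2^(k-1) + 1 \<and> cnt c s (\<Lambda> + 1) = 2^k - 4) \<and>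
         (j + 2 = 2^k \<longrightarrow>
            cnt c s \<Lambda> = (2^k - 1) * l + 2^(k-1) - 1 \<and> cnt c s (\<Lambda> + 1) = 2^k - 1)))"
proof -
  obtain c where pc: "prefix_code c" and len: "\<forall>x. length (c x) = ol x" using ol_code by blast
  have opt: "optimal_prefix_code (TDGD (1 / 2 ^ k)) c" using optimal[OF len pc] by (simp add: q_def)
  have head: "\<forall>s i j. s = 2^i + j - 1 \<and> i \<le> k - 2 \<and> j \<le> 2^i - 1 \<longrightarrow>
       (let \<Lambda> = (s + 2) * (i + 1) - 2^(i+1) in
         (\<forall>a b. a + b = s \<longrightarrow> length (c (a, b)) \<in> {\<Lambda>, \<Lambda> + 1}) \<and>
         cnt c s \<Lambda> = 2^i - j - 1 \<and> cnt c s (\<Lambda> + 1) = 2 * j + 1)"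
  proof (intro allI impI)
    fix s i j :: nat assume a: "s = 2^i + j - 1 \<and> i \<le> k - 2 \<and> j \<le> 2^i - 1"
    then have hm: "s < s0" "Lam s = (s + 2) * (i + 1) - 2^(i+1)" "Acnt s = 2^i - j - 1" "Suc s - Acnt s = 2 * j + 1"
      using head_match[of s i j] by auto
    show "let \<Lambda> = (s + 2) * (i + 1) - 2^(i+1) in
         (\<forall>a b. a + b = s \<longrightarrow> length (c (a, b)) \<in> {\<Lambda>, \<Lambda> + 1}) \<and>
         cnt c s \<Lambda> = 2^i - j - 1 \<and> cnt c s (\<Lambda> + 1) = 2 * j + 1"
      unfolding Let_def hm(2)[symmetric] using cnt_ol[OF len, of s] hm(3,4) by simp
  qed
  have tail: "\<forall>s l j. s = 2^(k-1) - 1 + (2^k - 1) * l + j \<and> j \<le> 2^k - 2 \<longrightarrow>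
       (let \<Lambda> = (s + 2) * k - 2^k in
         (\<forall>a b. a + b = s \<longrightarrow> length (c (a, b)) \<in> {\<Lambda>, \<Lambda> + 1}) \<and>
         (j + 3 \<le> 2^(k-1) \<longrightarrow>
            cnt c s \<Lambda> = (2^k - 1) * l + 2^(k-1) - j - 1 \<and> cnt c s (\<Lambda> + 1) = 2 * j + 1) \<and>
         (j + 2 = 2^(k-1) \<longrightarrow>
            cnt c s \<Lambda> = (2^k - 1) * l \<and> cnt c s (\<Lambda> + 1) = 2^k - 2) \<and>
         (2^(k-1) - 1 \<le> j \<and> j + 4 \<le> 2^k \<longrightarrow>
            cnt c s \<Lambda> = (2^k - 1) * l + 3 * 2^(k-1) - 2 - j \<and> cnt c s (\<Lambda> + 1) = 2 * j + 2 - 2^k) \<and>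
         (j + 3 = 2^k \<longrightarrow>
            cnt c s \<Lambda> = (2^k - 1) * l + 2^(k-1) + 1 \<and> cnt c s (\<Lambda> + 1) = 2^k - 4) \<and>
         (j + 2 = 2^k \<longrightarrow>
            cnt c s \<Lambda> = (2^k - 1) * l + 2^(k-1) - 1 \<and> cnt c s (\<Lambda> + 1) = 2^k - 1))"
  proof (intro allI impI)
    fix s l j :: nat assume a: "s = 2^(k-1) - 1 + (2^k - 1) * l + j \<and> j \<le> 2^k - 2"
    then have s: "s = 2^(k-1) - 1 + (2^k - 1) * l + j" and j: "j \<le> 2^k - 2" by simp_all
    note tm = tail_match[OF s j]
    note co = cnt_ol[OF len, of s]
    show "let \<Lambda> = (s + 2) * k - 2^k in
         (\<forall>a b. a + b = s \<longrightarrow> length (c (a, b)) \<in> {\<Lambda>, \<Lambda> + 1}) \<and>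
         (j + 3 \<le> 2^(k-1) \<longrightarrow>
            cnt c s \<Lambda> = (2^k - 1) * l + 2^(k-1) - j - 1 \<and> cnt c s (\<Lambda> + 1) = 2 * j + 1) \<and>
         (j + 2 = 2^(k-1) \<longrightarrow>
            cnt c s \<Lambda> = (2^k - 1) * l \<and> cnt c s (\<Lambda> + 1) = 2^k - 2) \<and>
         (2^(k-1) - 1 \<le> j \<and> j + 4 \<le> 2^k \<longrightarrow>
            cnt c s \<Lambda> = (2^k - 1) * l + 3 * 2^(k-1) - 2 - j \<and> cnt c s (\<Lambda> + 1) = 2 * j + 2 - 2^k) \<and>
         (j + 3 = 2^k \<longrightarrow>
            cnt c s \<Lambda> = (2^k - 1) * l + 2^(k-1) + 1 \<and> cnt c s (\<Lambda> + 1) = 2^k - 4) \<and>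
         (j + 2 = 2^k \<longrightarrow>
            cnt c s \<Lambda> = (2^k - 1) * l + 2^(k-1) - 1 \<and> cnt c s (\<Lambda> + 1) = 2^k - 1)"
      unfolding Let_def tm(2)[symmetric] co(1) co(2)
    proof (intro conjI impI)
      show "\<forall>a b. a + b = s \<longrightarrow> length (c (a, b)) \<in> {Lam s, Lam s + 1}" by (rule co(3))
    qed (use tm(3-7) in auto)
  qed
  show ?thesis using opt head tail by blast
qed

end

theorem mainTheorem14:
  fixes k :: nat and q :: real
  assumes "k \<ge> 2" and "q = 1 / 2 ^ k"
  shows "\<exists>c. optimal_prefix_code (TDGD q) c \<and>
    (\<forall>s i j. s = 2^i + j - 1 \<and> i \<le> k - 2 \<and> j \<le> 2^i - 1 \<longrightarrow>
       (let \<Lambda> = (s + 2) * (i + 1) - 2^(i+1) in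
         (\<forall>a b. a + b = s \<longrightarrow> length (c (a, b)) \<in> {\<Lambda>, \<Lambda> + 1}) \<and>
         cnt c s \<Lambda> = 2^i - j - 1 \<and> cnt c s (\<Lambda> + 1) = 2 * j + 1)) \<and>
    (\<forall>s l j. s = 2^(k-1) - 1 + (2^k - 1) * l + j \<and> j \<le> 2^k - 2 \<longrightarrow>
       (let \<Lambda> = (s + 2) * k - 2^k in
         (\<forall>a b. a + b = s \<longrightarrow> length (c (a, b)) \<in> {\<Lambda>, \<Lambda> + 1}) \<and>
         (j + 3 \<le> 2^(k-1) \<longrightarrow>
            cnt c s \<Lambda> = (2^k - 1) * l + 2^(k-1) - j - 1 \<and> cnt c s (\<Lambda> + 1) = 2 * j + 1) \<and>
         (j + 2 = 2^(k-1) \<longrightarrow>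
            cnt c s \<Lambda> = (2^k - 1) * l \<and> cnt c s (\<Lambda> + 1) = 2^k - 2) \<and>
         (2^(k-1) - 1 \<le> j \<and> j + 4 \<le> 2^k \<longrightarrow>
            cnt c s \<Lambda> = (2^k - 1) * l + 3 * 2^(k-1) - 2 - j \<and> cnt c s (\<Lambda> + 1) = 2 * j + 2 - 2^k) \<and>
         (j + 3 = 2^k \<longrightarrow>
            cnt c s \<Lambda> = (2^k - 1) * l + 2^(k-1) + 1 \<and> cnt c s (\<Lambda> + 1) = 2^k - 4) \<and>
         (j + 2 = 2^k \<longrightarrow>
            cnt c s \<Lambda> = (2^k - 1) * l + 2^(k-1) - 1 \<and> cnt c s (\<Lambda> + 1) = 2^k - 1)))"
proof -
  interpret tdgd k using assms(1) by unfold_locales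
  show ?thesis using main_loc unfolding assms(2) .
qed

end
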